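(* Let $q$ be a prime power and $k\ge3$, $h\ge2$ integers, and $1\le u_0<u_1\le\dots\le u_h$ integers. Let $U_0,U_1,\dots,U_h$ be subspaces of $\mathbf F_q^k$ of dimensions $u_0,u_1,\dots,u_h$ with $U_i\cap U_j=U_0$ for all distinct $i,j\in\{1,\dots,h\}$, and assume $q^k-q^{k-1}>q^{u_0}-1+\sum_{i=1}^h(q^{u_i}-q^{u_0})$. Let $U$ be the set of nonzero vectors of $\mathbf F_q^k$ not in $U_1\cup\dots\cup U_h$, let $\widetilde G$ be a matrix whose columns consist of exactly one representative of each class $\{\lambda\mathbf v:\lambda\in\mathbf F_q^*\}$, $\mathbf v\in U$, and let $\mathbf C$ be the linear code with generator matrix $\widetilde G$, with parameters $\big[\frac{(q^k-q^{u_0})-\sum_{i=1}^h(q^{u_i}-q^{u_0})}{q-1},k,d=q^{k-1}-\sum_{i=1}^hq^{u_i-1}\big]_q$. Then $\mathbf C$ is distance optimal in the following cases: 1) $u_1=\dots=u_{s_1}<u_{s_1+1}=\dots=u_{s_1+s_2}<\dots<u_{s_1+\dots+s_{t-1}+1}=\dots=u_{s_1+\dots+s_t}$ with $1\le s_i<q$ ($i=1,\dots,t$), $h=s_1+\dots+s_t$, and $u_1>(h-1)\frac{q^{u_0}-1}{q-1}$; 2) $u_1=\dots=u_h=u$ and $i_h+u>(h-1)\frac{q^{u_0}-1}{q-1}+\sum_{i=1}^{k-u}\lfloor h/q^i\rfloor$.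
   Context: For a positive integer $h$ with $q$-adic expansion $h=h_{m-1}q^{m-1}+\dots+h_0$ ($0\le h_i<q$), $i_h$ denotes the least index $i\ge0$ with $h_i>0$. A linear $[n,k,d]_q$ code is distance optimal if no linear $[n,k,d+1]_q$ code exists. *)

theory Defs
  imports Complex_Main "HOL-Library.Function_Algebras"
begin

text \<open>Vectors of F^n are represented as functions nat => 'a that vanish outside {..<n}.
  The vector space structure is the pointwise one (from Function_Algebras),
  with scalar multiplication sc.\<close>

definition sc :: "'a::field \<Rightarrow> (nat \<Rightarrow> 'a) \<Rightarrow> (nat \<Rightarrow> 'a)" where
  "sc c v = (\<lambda>i. c * v i)"

interpretation fv: vector_space "sc :: 'a::field \<Rightarrow> (nat \<Rightarrow> 'a) \<Rightarrow> (nat \<Rightarrow> 'a)"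
  by unfold_locales (auto simp: sc_def fun_eq_iff algebra_simps)

definition fvecs :: "nat \<Rightarrow> (nat \<Rightarrow> 'a::zero) set" where
  "fvecs n = {v. \<forall>i\<ge>n. v i = 0}"

definition lsubspace :: "nat \<Rightarrow> (nat \<Rightarrow> 'a::field) set \<Rightarrow> bool" where
  "lsubspace n W \<longleftrightarrow> W \<subseteq> fvecs n \<and> fv.subspace W"

abbreviation vdim :: "(nat \<Rightarrow> 'a::field) set \<Rightarrow> nat" where
  "vdim W \<equiv> fv.dim W"

definition hdist :: "(nat \<Rightarrow> 'a::zero) \<Rightarrow> (nat \<Rightarrow> 'a) \<Rightarrow> nat" where
  "hdist x y = card {i. x i \<noteq> y i}"

definition min_dist :: "(nat \<Rightarrow> 'a::zero) set \<Rightarrow> nat" where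
  "min_dist C = Min {hdist x y | x y. x \<in> C \<and> y \<in> C \<and> x \<noteq> y}"

text \<open>A linear [n,k,d]_q code (q = CARD('a)).\<close>
definition lin_code :: "nat \<Rightarrow> nat \<Rightarrow> nat \<Rightarrow> (nat \<Rightarrow> 'a::{field,finite}) set \<Rightarrow> bool" where
  "lin_code n k d C \<longleftrightarrow> lsubspace n C \<and> vdim C = k \<and> min_dist C = d"

definition distance_optimal :: "nat \<Rightarrow> nat \<Rightarrow> nat \<Rightarrow> (nat \<Rightarrow> 'a::{field,finite}) set \<Rightarrow> bool" where
  "distance_optimal n k d C \<longleftrightarrow>
     lin_code n k d C \<and> \<not> (\<exists>C' :: (nat \<Rightarrow> 'a) set. lin_code n k (d + 1) C')"

text \<open>The code generated by the k x n matrix whose j-th column is cols ! j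
  (row space: all x G for x in F^k).\<close>
definition gen_code :: "nat \<Rightarrow> (nat \<Rightarrow> 'a::field) list \<Rightarrow> (nat \<Rightarrow> 'a) set" where
  "gen_code k cols =
     {(\<lambda>j. if j < length cols then (\<Sum>i<k. x i * (cols ! j) i) else 0) | x :: nat \<Rightarrow> 'a. True}"

text \<open>i_h: least index i with nonzero q-adic digit h_i of h.\<close>
definition low_digit :: "nat \<Rightarrow> nat \<Rightarrow> nat" where
  "low_digit q h = (LEAST i. (h div q ^ i) mod q > 0)"

end

theory Submission
  imports Defs "HOL-Library.FuncSet"
begin

lemma sc_apply: "sc c v i = c * v i" by (simp add: sc_def)

lemma finite_fvecs: "finite (fvecs k :: (nat \<Rightarrow> 'a::{zero,finite}) set)"
proof -
  have "fvecs k = (\<lambda>f i. if i < k then f i else 0) ` (PiE {..<k} (\<lambda>_. (UNIV::'a set)))"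
  proof (rule set_eqI, rule iffI)
    fix v :: "nat \<Rightarrow> 'a" assume "v \<in> fvecs k"
    then have "v = (\<lambda>i. if i < k then restrict v {..<k} i else 0)"
      by (auto simp: fvecs_def fun_eq_iff)
    then show "v \<in> (\<lambda>f i. if i < k then f i else 0) ` (PiE {..<k} (\<lambda>_. (UNIV::'a set)))"
      by (intro image_eqI[where x="restrict v {..<k}"]) auto
  next
    fix v :: "nat \<Rightarrow> 'a" assume "v \<in> (\<lambda>f i. if i < k then f i else 0) ` (PiE {..<k} (\<lambda>_. (UNIV::'a set)))"
    then obtain f where "v = (\<lambda>i. if i < k then f i else 0)" by blast
    then show "v \<in> fvecs k" by (simp add: fvecs_def)
  qed
  then show ?thesis by (simp add: finite_PiE)
qed

lemma card_fvecs: "card (fvecs k :: (nat \<Rightarrow> 'a::{zero,finite}) set) = card (UNIV::'a set) ^ k"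
proof -
  let ?P = "PiE {..<k} (\<lambda>_. (UNIV::'a set))"
  have inj: "inj_on (\<lambda>v. restrict v {..<k}) (fvecs k :: (nat \<Rightarrow> 'a) set)"
  proof (rule inj_onI)
    fix v w :: "nat \<Rightarrow> 'a" assume v: "v \<in> fvecs k" and w: "w \<in> fvecs k"
      and eq: "restrict v {..<k} = restrict w {..<k}"
    show "v = w"
    proof
      fix i show "v i = w i"
      proof (cases "i < k")
        case True
        then have "restrict v {..<k} i = restrict w {..<k} i" using eq by simp
        then show ?thesis using True by simp
      next
        case False
        then show ?thesis using v w unfolding fvecs_def by simp
      qed
    qed
  qed
  have img: "(\<lambda>v. restrict v {..<k}) ` fvecs k = ?P"
  proof (rule set_eqI, rule iffI)
    fix f assume f: "f \<in> ?P"
    have "f = restrict (\<lambda>i. if i < k then f i else 0) {..<k}"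
    proof
      fix i show "f i = restrict (\<lambda>i. if i < k then f i else 0) {..<k} i"
      proof (cases "i < k")
        case True
        then show ?thesis by simp
      next
        case False
        then have "f i = undefined" using f PiE_arb[of f "{..<k}" _ i] by simp
        then show ?thesis using False by simp
      qed
    qed
    moreover have "(\<lambda>i. if i < k then f i else 0) \<in> fvecs k" by (simp add: fvecs_def)
    ultimately show "f \<in> (\<lambda>v. restrict v {..<k}) ` fvecs k" by blast
  next
    fix f :: "nat \<Rightarrow> 'a" assume "f \<in> (\<lambda>v. restrict v {..<k}) ` fvecs k"
    then obtain v where "f = restrict v {..<k}" by blast
    then show "f \<in> ?P" by simp
  qed
  have "card (fvecs k :: (nat \<Rightarrow> 'a) set) = card ?P"
    using card_image[OF inj] img by simp
  also have "\<dots> = card (UNIV::'a set) ^ k" by (simp add: card_PiE)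
  finally show ?thesis .
qed

lemma card_span_indep:
  assumes "finite B" "fv.independent (B :: (nat \<Rightarrow> 'a::{field,finite}) set)"
  shows "card (fv.span B) = card (UNIV::'a set) ^ card B"
  using assms
proof (induction B rule: finite_induct)
  case empty
  then show ?case by (simp add: fv.span_empty)
next
  case (insert b B)
  have indB: "fv.independent B" and nb: "b \<notin> fv.span B"
    using insert.prems insert.hyps by (auto simp: fv.independent_insert)
  have IH: "card (fv.span B) = card (UNIV::'a set) ^ card B" using insert.IH indB by simp
  have eq: "fv.span (insert b B) = (\<lambda>(c, w). sc c b + w) ` ((UNIV::'a set) \<times> fv.span B)"
  proof (rule set_eqI, rule iffI)
    fix x assume "x \<in> fv.span (insert b B)"
    then obtain c where "x - sc c b \<in> fv.span B" by (auto simp: fv.span_breakdown_eq)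
    then show "x \<in> (\<lambda>(c, w). sc c b + w) ` ((UNIV::'a set) \<times> fv.span B)"
      by (intro image_eqI[where x="(c, x - sc c b)"]) auto
  next
    fix x assume "x \<in> (\<lambda>(c, w). sc c b + w) ` ((UNIV::'a set) \<times> fv.span B)"
    then obtain c w where "w \<in> fv.span B" "x = sc c b + w" by auto
    then show "x \<in> fv.span (insert b B)"
    proof -
      assume w: "w \<in> fv.span B" and x: "x = sc c b + w"
      have "b \<in> fv.span (insert b B)" by (rule fv.span_base) simp
      then have "sc c b \<in> fv.span (insert b B)" by (rule fv.span_scale)
      moreover have "w \<in> fv.span (insert b B)" using fv.span_mono[of B "insert b B"] w by blast
      ultimately show ?thesis unfolding x by (rule fv.span_add)
    qed
  qed
  have inj: "inj_on (\<lambda>(c, w). sc c b + w) ((UNIV::'a set) \<times> fv.span B)"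
  proof (rule inj_onI, clarsimp)
    fix c w c' w'
    assume w: "w \<in> fv.span B" "w' \<in> fv.span B" and e: "sc c b + w = sc c' b + w'"
    have "sc (c - c') b = w' - w"
    proof
      fix i
      have "c * b i + w i = c' * b i + w' i" using fun_cong[OF e, of i] by (simp add: sc_apply)
      then show "sc (c - c') b i = (w' - w) i" by (simp add: sc_apply algebra_simps)
    qed
    then have "sc (c - c') b \<in> fv.span B" using w by (simp add: fv.span_diff)
    then have "c = c'"
    proof (rule contrapos_pp)
      assume "c \<noteq> c'"
      then have bb: "b = sc (inverse (c - c')) (sc (c - c') b)" by (simp add: fun_eq_iff sc_apply)
      show "sc (c - c') b \<notin> fv.span B"
      proof
        assume "sc (c - c') b \<in> fv.span B"
        then have "sc (inverse (c - c')) (sc (c - c') b) \<in> fv.span B" by (rule fv.span_scale)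
        then show False using bb nb by simp
      qed
    qed
    then show "c = c' \<and> w = w'" using e by simp
  qed
  have "card (fv.span (insert b B)) = card ((UNIV::'a set) \<times> fv.span B)"
    unfolding eq by (rule card_image[OF inj])
  also have "\<dots> = card (UNIV::'a set) * card (fv.span B)" by (simp add: card_cartesian_product)
  finally show ?case using IH insert.hyps by simp
qed

lemma card_subspace:
  assumes "W \<subseteq> fvecs k" "fv.subspace (W :: (nat \<Rightarrow> 'a::{field,finite}) set)"
  shows "card W = card (UNIV::'a set) ^ vdim W"
proof -
  obtain B where B: "B \<subseteq> W" "fv.independent B" "W \<subseteq> fv.span B" "card B = vdim W"
    by (rule fv.basis_exists)
  have fB: "finite B" using finite_subset[OF order_trans[OF B(1) assms(1)] finite_fvecs] .
  have "fv.span B = W" using fv.span_subspace[OF B(1) B(3) assms(2)] .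
  then show ?thesis using card_span_indep[OF fB B(2)] B(4) by simp
qed

lemma card_field_ge2: "2 \<le> card (UNIV :: 'a::{field,finite} set)"
proof -
  have "{0, 1} \<subseteq> (UNIV :: 'a set)" by simp
  then have "card {0::'a, 1} \<le> card (UNIV :: 'a set)" by (rule card_mono[OF finite_UNIV])
  then show ?thesis by simp
qed

lemma nested_cdiv:
  fixes a b c :: nat
  assumes "b > 0" "c > 0"
  shows "((a + b - 1) div b + c - 1) div c = (a + b * c - 1) div (b * c)"
proof -
  obtain b' where b: "b = Suc b'" using assms by (cases b) auto
  obtain c' where c: "c = Suc c'" using assms by (cases c) auto
  have "a + b * c - 1 = (a + b') + b * c'" by (simp add: b c algebra_simps)
  then have "(a + b * c - 1) div b = (a + b') div b + c'"
    using div_mult_self2[of b "a + b'" c'] b by simp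
  then have "(a + b * c - 1) div (b * c) = ((a + b') div b + c') div c"
    by (simp add: div_mult2_eq)
  moreover have "(a + b - 1) div b + c - 1 = (a + b') div b + c'" by (simp add: b c)
  ultimately show ?thesis by simp
qed

definition wt :: "(nat \<Rightarrow> 'a::zero) \<Rightarrow> nat" where
  "wt c = card {j. c j \<noteq> 0}"

definition resid :: "nat set \<Rightarrow> (nat \<Rightarrow> 'a::zero) \<Rightarrow> (nat \<Rightarrow> 'a)" where
  "resid T c = (\<lambda>j. if j \<in> T then 0 else c j)"

lemma resid_add: "resid T (a + b) = resid T a + resid T (b :: nat \<Rightarrow> 'a::monoid_add)"
  by (simp add: resid_def fun_eq_iff)

lemma resid_sc: "resid T (sc t a) = sc t (resid T a)"
  by (simp add: resid_def fun_eq_iff sc_apply)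

lemma resid_diff: "resid T (a - b) = resid T a - resid T (b :: nat \<Rightarrow> 'a::ab_group_add)"
  by (simp add: resid_def fun_eq_iff)

lemma subspace_image_resid:
  assumes "fv.subspace (C :: (nat \<Rightarrow> 'a::field) set)"
  shows "fv.subspace (resid T ` C)"
  unfolding fv.subspace_def
proof (intro conjI ballI allI)
  show "0 \<in> resid T ` C"
    using fv.subspace_0[OF assms] by (intro image_eqI[where x=0]) (auto simp: resid_def fun_eq_iff)
next
  fix x y assume "x \<in> resid T ` C" "y \<in> resid T ` C"
  then obtain a b where "a \<in> C" "b \<in> C" "x = resid T a" "y = resid T b" by blast
  then show "x + y \<in> resid T ` C"
    using fv.subspace_add[OF assms] by (intro image_eqI[where x="a + b"]) (auto simp: resid_add)
next
  fix t x assume "x \<in> resid T ` C"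
  then obtain a where "a \<in> C" "x = resid T a" by blast
  then show "sc t x \<in> resid T ` C"
    using fv.subspace_scale[OF assms] by (intro image_eqI[where x="sc t a"]) (auto simp: resid_sc)
qed

lemma griesmer_core:
  fixes C :: "(nat \<Rightarrow> 'a::{field,finite}) set"
  assumes "fv.subspace C" "finite S" "\<forall>c\<in>C. \<forall>j. j \<notin> S \<longrightarrow> c j = 0"
    "card C = card (UNIV::'a set) ^ k" "\<forall>c\<in>C. c \<noteq> 0 \<longrightarrow> d \<le> wt c"
  shows "(\<Sum>i<k. (d + card (UNIV::'a set) ^ i - 1) div card (UNIV::'a set) ^ i) \<le> card S"
  using assms
proof (induction k arbitrary: C S d)
  case 0
  show ?case by simp
next
  case (Suc k)
  let ?q = "card (UNIV :: 'a set)"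
  have q2: "?q \<ge> 2" by (rule card_field_ge2)
  note sub = Suc.prems(1) and finS = Suc.prems(2) and supp = Suc.prems(3)
    and cardC = Suc.prems(4) and dC = Suc.prems(5)
  have cpos: "card C \<ge> 2"
  proof -
    have "?q ^ 1 \<le> ?q ^ Suc k" using q2 by (intro power_increasing) auto
    then have "2 \<le> ?q ^ Suc k" using q2 by (metis power_one_right order_trans)
    then show ?thesis using cardC by linarith
  qed
  have finC: "finite C" using cpos card.infinite by fastforce
  obtain c1 where c1: "c1 \<in> C" "c1 \<noteq> 0"
  proof -
    have "\<not> C \<subseteq> {0}"
    proof
      assume "C \<subseteq> {0}"
      then have "card C \<le> card {0 :: nat \<Rightarrow> 'a}" by (rule card_mono[rotated]) simp
      then show False using cpos by simp
    qed
    then show ?thesis using that by blast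
  qed
  obtain c0 where c0: "c0 \<in> C \<and> c0 \<noteq> 0" and cmin: "\<forall>c. c \<in> C \<and> c \<noteq> 0 \<longrightarrow> wt c0 \<le> wt c"
    using ex_has_least_nat[of "\<lambda>c. c \<in> C \<and> c \<noteq> 0" c1 wt] c1 by blast
  define T where "T = {j. c0 j \<noteq> 0}"
  have TS: "T \<subseteq> S" using supp c0 by (auto simp: T_def)
  have finT: "finite T" using TS finS finite_subset by blast
  have wT: "card T = wt c0" by (simp add: wt_def T_def)
  have dT: "d \<le> card T" using dC c0 wT by (metis)
  obtain j0 where j0: "j0 \<in> T"
  proof -
    have "\<exists>j. c0 j \<noteq> 0" using c0 by (auto simp: fun_eq_iff)
    then show ?thesis using that by (auto simp: T_def)
  qed
  have c0off: "\<And>j. j \<notin> T \<Longrightarrow> c0 j = 0" by (simp add: T_def)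
  have ker: "\<exists>t. z = sc t c0" if z: "z \<in> C" "\<forall>j. j \<notin> T \<longrightarrow> z j = 0" for z
  proof -
    define t where "t = z j0 / c0 j0"
    define z' where "z' = z - sc t c0"
    have z'C: "z' \<in> C" unfolding z'_def
      using fv.subspace_diff[OF sub z(1) fv.subspace_scale[OF sub, of c0 t]] c0 by simp
    have "{j. z' j \<noteq> 0} \<subseteq> T - {j0}"
    proof
      fix j assume j: "j \<in> {j. z' j \<noteq> 0}"
      show "j \<in> T - {j0}"
      proof (cases "j \<in> T")
        case True
        have "z' j0 = 0" using j0 by (simp add: z'_def t_def sc_apply T_def)
        then show ?thesis using True j by auto
      next
        case False
        then have "z' j = 0" using z(2) c0off by (simp add: z'_def sc_apply)
        then show ?thesis using j by simp
      qed
    qed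
    then have "wt z' \<le> card (T - {j0})" unfolding wt_def using finT by (intro card_mono) auto
    also have "\<dots> < card T" using finT j0 by (rule card_Diff1_less)
    finally have "wt z' < wt c0" using wT by simp
    then have "z' = 0" using cmin z'C by (meson not_le)
    then show ?thesis by (intro exI[of _ t]) (simp add: z'_def)
  qed
  have rc0: "resid T c0 = 0" by (simp add: resid_def fun_eq_iff c0off)
  define C' where "C' = resid T ` C"
  define F where "F y = {c \<in> C. resid T c = y}" for y
  have cardF: "card (F y) = ?q" if y: "y \<in> C'" for y
  proof -
    obtain c where c: "c \<in> C" "resid T c = y" using y by (auto simp: C'_def)
    have "F y = (\<lambda>t. c + sc t c0) ` UNIV"
    proof (rule set_eqI, rule iffI)
      fix x assume x: "x \<in> F y"
      then have xC: "x \<in> C" and rx: "resid T x = y" by (auto simp: F_def)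
      have "x - c \<in> C" using fv.subspace_diff[OF sub xC c(1)] .
      moreover have "\<forall>j. j \<notin> T \<longrightarrow> (x - c) j = 0"
      proof (intro allI impI)
        fix j assume "j \<notin> T"
        then have "resid T x j = x j" "resid T c j = c j" by (simp_all add: resid_def)
        then show "(x - c) j = 0" using rx c(2) by simp
      qed
      ultimately obtain t where "x - c = sc t c0" using ker by blast
      then have "x = c + sc t c0" by (metis add.commute diff_add_cancel)
      then show "x \<in> (\<lambda>t. c + sc t c0) ` UNIV" by blast
    next
      fix x assume "x \<in> (\<lambda>t. c + sc t c0) ` UNIV"
      then obtain t where x: "x = c + sc t c0" by blast
      have "x \<in> C" unfolding x using fv.subspace_add[OF sub c(1) fv.subspace_scale[OF sub, of c0 t]] c0 by simp
      moreover have "resid T x = y" unfolding x by (simp add: resid_add resid_sc rc0 c(2))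
      ultimately show "x \<in> F y" by (simp add: F_def)
    qed
    moreover have "inj (\<lambda>t. c + sc t c0)"
    proof (rule injI)
      fix t t' assume "c + sc t c0 = c + sc t' c0"
      then have "t * c0 j0 = t' * c0 j0" by (metis add_left_cancel sc_apply)
      then show "t = t'" using j0 by (simp add: T_def)
    qed
    ultimately show ?thesis by (simp add: card_image)
  qed
  have Cunion: "C = (\<Union>y\<in>C'. F y)" by (auto simp: F_def C'_def)
  have "card C = (\<Sum>y\<in>C'. card (F y))"
    unfolding Cunion
  proof (rule card_UN_disjoint)
    show "finite C'" using finC by (simp add: C'_def)
    show "\<forall>i\<in>C'. finite (F i)" using finC by (simp add: F_def)
    show "\<forall>i\<in>C'. \<forall>j\<in>C'. i \<noteq> j \<longrightarrow> F i \<inter> F j = {}" by (auto simp: F_def)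
  qed
  also have "\<dots> = ?q * card C'" using cardF by simp
  finally have "?q * card C' = ?q * ?q ^ k" using cardC by simp
  then have cardC': "card C' = ?q ^ k" using q2 by simp
  have subC': "fv.subspace C'" unfolding C'_def by (rule subspace_image_resid[OF sub])
  have suppC': "\<forall>c\<in>C'. \<forall>j. j \<notin> S - T \<longrightarrow> c j = 0"
    using supp by (auto simp: C'_def resid_def)
  have finST: "finite (S - T)" using finS by simp
  have wC': "card T \<le> ?q * wt y" if y: "y \<in> C'" "y \<noteq> 0" for y
  proof -
    obtain c where c: "c \<in> C" "resid T c = y" using y by (auto simp: C'_def)
    define A where "A t = {j \<in> T. c j + t * c0 j \<noteq> 0}" for t
    have vC: "c + sc t c0 \<in> C" for t
      using fv.subspace_add[OF sub c(1) fv.subspace_scale[OF sub, of c0 t]] c0 by simp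
    have vnz: "c + sc t c0 \<noteq> 0" for t
    proof
      assume "c + sc t c0 = 0"
      then have "resid T (c + sc t c0) = resid T 0" by simp
      moreover have "resid T (c + sc t c0) = y" by (simp add: resid_add resid_sc rc0 c(2))
      moreover have "resid T (0 :: nat \<Rightarrow> 'a) = 0" by (simp add: resid_def fun_eq_iff)
      ultimately have "y = 0" by simp
      then show False using y by simp
    qed
    have wv: "wt (c + sc t c0) = card (A t) + wt y" for t
    proof -
      have eq: "{j. (c + sc t c0) j \<noteq> 0} = A t \<union> {j. y j \<noteq> 0}"
        using c0off by (auto simp: A_def sc_apply c(2)[symmetric] resid_def)
      have fy: "finite {j. y j \<noteq> 0}"
      proof (rule finite_subset[OF _ finS])
        show "{j. y j \<noteq> 0} \<subseteq> S" using supp c by (auto simp: resid_def split: if_splits)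
      qed
      have fA: "finite (A t)" using finT by (simp add: A_def)
      have "A t \<inter> {j. y j \<noteq> 0} = {}" by (auto simp: A_def c(2)[symmetric] resid_def)
      then show ?thesis unfolding wt_def eq using card_Un_disjoint[OF fA fy] by simp
    qed
    have sumA: "(\<Sum>t\<in>UNIV. card (A t)) = card T * (?q - 1)"
    proof -
      have "(\<Sum>t\<in>UNIV. card (A t)) = (\<Sum>t\<in>(UNIV::'a set). \<Sum>j\<in>T. of_bool (c j + t * c0 j \<noteq> 0))"
      proof (rule sum.cong[OF refl])
        fix t
        have "(\<Sum>j\<in>T. (of_bool (c j + t * c0 j \<noteq> 0) :: nat)) = card (T \<inter> {j. c j + t * c0 j \<noteq> 0})"
          using finT by simp
        then show "card (A t) = (\<Sum>j\<in>T. of_bool (c j + t * c0 j \<noteq> 0))"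
          by (simp add: A_def Int_def)
      qed
      also have "\<dots> = (\<Sum>j\<in>T. \<Sum>t\<in>(UNIV::'a set). of_bool (c j + t * c0 j \<noteq> 0))"
        by (rule sum.swap)
      also have "\<dots> = (\<Sum>j\<in>T. ?q - 1)"
      proof (rule sum.cong[OF refl])
        fix j assume j: "j \<in> T"
        have "(\<Sum>t\<in>(UNIV::'a set). (of_bool (c j + t * c0 j \<noteq> 0) :: nat)) = card (UNIV \<inter> {t. c j + t * c0 j \<noteq> 0})"
          by simp
        also have "UNIV \<inter> {t. c j + t * c0 j \<noteq> 0} = UNIV - {- c j / c0 j}"
          using j by (auto simp: T_def field_simps add_eq_0_iff2)
        also have "card (UNIV - {- c j / c0 j}) = ?q - 1" by (simp add: card_Diff_singleton)
        finally show "(\<Sum>t\<in>(UNIV::'a set). (of_bool (c j + t * c0 j \<noteq> 0) :: nat)) = ?q - 1" .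
      qed
      also have "\<dots> = card T * (?q - 1)" by simp
      finally show ?thesis .
    qed
    have "(\<Sum>t\<in>(UNIV::'a set). card T) \<le> (\<Sum>t\<in>(UNIV::'a set). wt (c + sc t c0))"
    proof (rule sum_mono)
      fix t :: 'a
      show "card T \<le> wt (c + sc t c0)" using cmin vC vnz wT by metis
    qed
    also have "\<dots> = (\<Sum>t\<in>(UNIV::'a set). card (A t)) + ?q * wt y"
      by (simp add: wv sum.distrib)
    finally have "?q * card T \<le> card T * (?q - 1) + ?q * wt y" using sumA by (simp add: mult.commute)
    moreover have "?q * card T = card T * (?q - 1) + card T" using q2
      by (metis add.commute mult.commute mult_eq_if not_numeral_le_zero)
    ultimately show ?thesis by linarith
  qed
  define d' where "d' = (d + ?q - 1) div ?q"
  have dC': "\<forall>c\<in>C'. c \<noteq> 0 \<longrightarrow> d' \<le> wt c"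
  proof (intro ballI impI)
    fix y assume y: "y \<in> C'" "y \<noteq> 0"
    have "d + ?q - 1 \<le> ?q * wt y + (?q - 1)" using wC'[OF y] dT q2 by linarith
    then have "d' \<le> (?q * wt y + (?q - 1)) div ?q" unfolding d'_def by (rule div_le_mono)
    also have "\<dots> = wt y"
    proof -
      have "((?q - 1) + ?q * wt y) div ?q = wt y + (?q - 1) div ?q"
        using q2 div_mult_self2[of ?q "?q - 1" "wt y"] by simp
      moreover have "(?q - 1) div ?q = 0" using q2 by simp
      ultimately show ?thesis by (simp add: add.commute)
    qed
    finally show "d' \<le> wt y" .
  qed
  have IH: "(\<Sum>i<k. (d' + ?q ^ i - 1) div ?q ^ i) \<le> card (S - T)"
    using Suc.IH[OF subC' finST suppC' cardC' dC'] .
  have "(\<Sum>i<Suc k. (d + ?q ^ i - 1) div ?q ^ i) = d + (\<Sum>i<k. (d + ?q ^ Suc i - 1) div ?q ^ Suc i)"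
    by (subst sum.lessThan_Suc_shift) (simp del: sum.lessThan_Suc power_Suc)
  also have "(\<Sum>i<k. (d + ?q ^ Suc i - 1) div ?q ^ Suc i) = (\<Sum>i<k. (d' + ?q ^ i - 1) div ?q ^ i)"
  proof (rule sum.cong[OF refl])
    fix i
    show "(d + ?q ^ Suc i - 1) div ?q ^ Suc i = (d' + ?q ^ i - 1) div ?q ^ i"
      unfolding d'_def using nested_cdiv[of ?q "?q ^ i" d] q2 by simp
  qed
  also have "card S = card T + card (S - T)"
    using card_Diff_subset[OF finT TS] card_mono[OF finS TS] by simp
  ultimately show ?case using IH dT by simp
qed

lemma delta_formula:
  fixes Q :: int and e :: "nat \<Rightarrow> nat"
  assumes Q: "Q \<ge> 2"
  shows "(\<Sum>j\<in>J. Q ^ e j div Q ^ i) + (Q ^ i - (\<Sum>j\<in>J. Q ^ e j)) div Q ^ i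
         = 1 + (- (\<Sum>j\<in>J. Q ^ e j mod Q ^ i)) div Q ^ i"
proof -
  define m where "m = (\<Sum>j\<in>J. Q ^ e j div Q ^ i)"
  define L where "L = (\<Sum>j\<in>J. Q ^ e j mod Q ^ i)"
  have pos: "Q ^ i > 0" using Q by simp
  have M: "(\<Sum>j\<in>J. Q ^ e j) = Q ^ i * m + L"
    unfolding m_def L_def sum_distrib_left sum.distrib[symmetric]
    by (rule sum.cong) (simp_all add: mult_div_mod_eq)
  have eq: "Q ^ i - (\<Sum>j\<in>J. Q ^ e j) = (- L) + (1 - m) * Q ^ i" unfolding M by (simp add: algebra_simps)
  have "((- L) + (1 - m) * Q ^ i) div Q ^ i = (1 - m) + (- L) div Q ^ i"
    by (rule div_mult_self1) (use Q in simp)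
  then have "(Q ^ i - (\<Sum>j\<in>J. Q ^ e j)) div Q ^ i = (1 - m) + (- L) div Q ^ i"
    unfolding eq .
  then show ?thesis unfolding m_def[symmetric] L_def[symmetric] by simp
qed

lemma sum_rev_geom:
  fixes Q :: int
  shows "(Q - 1) * (\<Sum>i<n. Q ^ (n - 1 - i)) = Q ^ n - 1"
proof -
  have "(\<Sum>i<n. Q ^ (n - 1 - i)) = (\<Sum>i<n. Q ^ i)"
    using sum.nat_diff_reindex[of "\<lambda>i. Q ^ i" n] by (simp add: diff_diff_add add.commute)
  then show ?thesis by (simp add: power_diff_1_eq)
qed

lemma sum_div_pow:
  fixes Q :: int
  assumes Q: "Q \<ge> 2" and ek: "e < k"
  shows "(Q - 1) * (\<Sum>i<k. Q ^ e div Q ^ i) = Q ^ Suc e - 1"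
proof -
  have "(\<Sum>i<k. Q ^ e div Q ^ i) = (\<Sum>i<Suc e. Q ^ e div Q ^ i)"
  proof (rule sum.mono_neutral_right)
    show "finite {..<k}" by simp
    show "{..<Suc e} \<subseteq> {..<k}" using ek by auto
    show "\<forall>i\<in>{..<k} - {..<Suc e}. Q ^ e div Q ^ i = 0"
    proof
      fix i assume "i \<in> {..<k} - {..<Suc e}"
      then have "e < i" by auto
      then have "Q ^ e < Q ^ i" using Q by (intro power_strict_increasing) auto
      then show "Q ^ e div Q ^ i = 0" using Q by (intro div_pos_pos_trivial) auto
    qed
  qed
  also have "\<dots> = (\<Sum>i<Suc e. Q ^ (Suc e - 1 - i))"
  proof (rule sum.cong[OF refl])
    fix i assume "i \<in> {..<Suc e}"
    then have "i \<le> e" by simp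
    then have "Q ^ e = Q ^ (e - i) * Q ^ i" by (simp add: power_add[symmetric])
    then show "Q ^ e div Q ^ i = Q ^ (Suc e - 1 - i)" using Q by simp
  qed
  finally show ?thesis using sum_rev_geom[of Q "Suc e"] by simp
qed

lemma ceil_term:
  fixes Q M :: int
  assumes Q: "Q \<ge> 2" and ik: "i < k"
  shows "(Q ^ (k - 1) - M + 1 + Q ^ i - 1) div Q ^ i = Q ^ (k - 1 - i) + (Q ^ i - M) div Q ^ i"
proof -
  have "Q ^ (k - 1) = Q ^ (k - 1 - i) * Q ^ i" using ik by (simp add: power_add[symmetric])
  then have eq: "Q ^ (k - 1) - M + 1 + Q ^ i - 1 = (Q ^ i - M) + Q ^ (k - 1 - i) * Q ^ i" by simp
  have "((Q ^ i - M) + Q ^ (k - 1 - i) * Q ^ i) div Q ^ i = Q ^ (k - 1 - i) + (Q ^ i - M) div Q ^ i"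
    by (rule div_mult_self1) (use Q in simp)
  then show ?thesis unfolding eq .
qed

lemma arith_main:
  fixes Q :: int and u :: "nat \<Rightarrow> nat" and k h u0 :: nat
  assumes Q: "Q \<ge> 2" and uk: "\<forall>j\<in>{1..h}. 1 \<le> u j \<and> u j \<le> k"
    and key: "(int h - 1) * (Q ^ u0 - 1) < (Q - 1) * (\<Sum>i<k. 1 + (- (\<Sum>j\<in>{1..h}. Q ^ (u j - 1) mod Q ^ i)) div Q ^ i)"
  shows "Q ^ k - Q ^ u0 - (\<Sum>j\<in>{1..h}. Q ^ u j - Q ^ u0)
         < (Q - 1) * (\<Sum>i<k. (Q ^ (k - 1) - (\<Sum>j\<in>{1..h}. Q ^ (u j - 1)) + 1 + Q ^ i - 1) div Q ^ i)"
proof -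
  define M where "M = (\<Sum>j\<in>{1..h}. Q ^ (u j - 1))"
  define e where "e i = (Q ^ i - M) div Q ^ i" for i
  define D where "D i = (\<Sum>j\<in>{1..h}. Q ^ (u j - 1) div Q ^ i)" for i
  have dl: "D i + e i = 1 + (- (\<Sum>j\<in>{1..h}. Q ^ (u j - 1) mod Q ^ i)) div Q ^ i" for i
    unfolding D_def e_def M_def by (rule delta_formula[OF Q])
  have c: "(\<Sum>i<k. (Q ^ (k - 1) - M + 1 + Q ^ i - 1) div Q ^ i) = (\<Sum>i<k. Q ^ (k - 1 - i)) + (\<Sum>i<k. e i)"
    unfolding sum.distrib[symmetric] e_def
  proof (rule sum.cong[OF refl])
    fix i assume "i \<in> {..<k}"
    then show "(Q ^ (k - 1) - M + 1 + Q ^ i - 1) div Q ^ i = Q ^ (k - 1 - i) + (Q ^ i - M) div Q ^ i"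
      using ceil_term[OF Q, of i k M] by simp
  qed
  have g1: "(Q - 1) * (\<Sum>i<k. Q ^ (k - 1 - i)) = Q ^ k - 1" by (rule sum_rev_geom)
  have g2: "(Q - 1) * (\<Sum>i<k. D i) = (\<Sum>j\<in>{1..h}. Q ^ u j - 1)"
  proof -
    have "(Q - 1) * (\<Sum>i<k. D i) = (\<Sum>j\<in>{1..h}. (Q - 1) * (\<Sum>i<k. Q ^ (u j - 1) div Q ^ i))"
      unfolding D_def sum_distrib_left by (rule sum.swap)
    also have "\<dots> = (\<Sum>j\<in>{1..h}. Q ^ u j - 1)"
    proof (rule sum.cong[OF refl])
      fix j assume j: "j \<in> {1..h}"
      then have "1 \<le> u j \<and> u j \<le> k" using uk by blast
      then have "u j - 1 < k" "Suc (u j - 1) = u j" by auto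
      then show "(Q - 1) * (\<Sum>i<k. Q ^ (u j - 1) div Q ^ i) = Q ^ u j - 1"
        using sum_div_pow[OF Q, of "u j - 1" k] by simp
    qed
    finally show ?thesis .
  qed
  have sdl: "(\<Sum>i<k. D i) + (\<Sum>i<k. e i) = (\<Sum>i<k. 1 + (- (\<Sum>j\<in>{1..h}. Q ^ (u j - 1) mod Q ^ i)) div Q ^ i)"
    unfolding sum.distrib[symmetric] using dl by simp
  have s1: "(\<Sum>j\<in>{1..h}. Q ^ u j - 1) = (\<Sum>j\<in>{1..h}. Q ^ u j) - int h"
    by (simp add: sum_subtractf)
  have s2: "(\<Sum>j\<in>{1..h}. Q ^ u j - Q ^ u0) = (\<Sum>j\<in>{1..h}. Q ^ u j) - int h * Q ^ u0"
    by (simp add: sum_subtractf)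
  have "(Q - 1) * (\<Sum>i<k. (Q ^ (k - 1) - M + 1 + Q ^ i - 1) div Q ^ i)
        = (Q ^ k - 1) + (Q - 1) * (\<Sum>i<k. 1 + (- (\<Sum>j\<in>{1..h}. Q ^ (u j - 1) mod Q ^ i)) div Q ^ i)
          - (\<Sum>j\<in>{1..h}. Q ^ u j - 1)"
    unfolding c sdl[symmetric] using g1 g2 by (simp add: algebra_simps)
  then show ?thesis unfolding M_def[symmetric] using key s1 s2 by (simp add: algebra_simps)
qed

definition dlt :: "int \<Rightarrow> nat \<Rightarrow> (nat \<Rightarrow> nat) \<Rightarrow> nat \<Rightarrow> int" where
  "dlt Q h u i = 1 + (- (\<Sum>j\<in>{1..h}. Q ^ (u j - 1) mod Q ^ i)) div Q ^ i"

lemma dlt_one: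
  fixes Q :: int
  assumes Q: "Q \<ge> 2" and iu: "\<forall>j\<in>{1..h}. i < u j"
  shows "dlt Q h u i = 1"
proof -
  have "(\<Sum>j\<in>{1..h}. Q ^ (u j - 1) mod Q ^ i) = 0"
  proof (rule sum.neutral, rule ballI)
    fix j assume "j \<in> {1..h}"
    then have "i < u j" using iu by blast
    then have "i \<le> u j - 1" by simp
    then have "Q ^ i dvd Q ^ (u j - 1)" by (rule le_imp_power_dvd)
    then show "Q ^ (u j - 1) mod Q ^ i = 0" by simp
  qed
  then show ?thesis by (simp add: dlt_def)
qed

lemma dlt_nonneg:
  fixes Q :: int
  assumes Q: "Q \<ge> 2" and L: "(\<Sum>j\<in>{1..h}. Q ^ (u j - 1) mod Q ^ i) \<le> Q ^ i"
  shows "dlt Q h u i \<ge> 0"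
proof -
  have pos: "Q ^ i > 0" using Q by simp
  have "(- (Q ^ i)) div Q ^ i \<le> (- (\<Sum>j\<in>{1..h}. Q ^ (u j - 1) mod Q ^ i)) div Q ^ i"
    using L pos by (intro zdiv_mono1) auto
  moreover have "(- (Q ^ i)) div Q ^ i = -1" using nonzero_mult_div_cancel_right[of "Q ^ i" "-1"] Q by simp
  ultimately show ?thesis by (simp add: dlt_def)
qed

lemma low_sum_bound:
  fixes q :: nat and u :: "nat \<Rightarrow> nat"
  assumes q: "q \<ge> 2" and fin: "finite J" and u1: "\<forall>j\<in>J. 1 \<le> u j"
    and mult: "\<forall>v. card {j\<in>J. u j = v} < q"
  shows "(\<Sum>j\<in>J. if u j \<le> i then q ^ (u j - 1) else 0) \<le> q ^ i - 1"
proof (induction i)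
  case 0
  have "(\<Sum>j\<in>J. if u j \<le> 0 then q ^ (u j - 1) else 0) = 0"
    using u1 by (intro sum.neutral) auto
  then show ?case by simp
next
  case (Suc i)
  have split: "(\<Sum>j\<in>J. if u j \<le> Suc i then q ^ (u j - 1) else 0)
      = (\<Sum>j\<in>J. if u j \<le> i then q ^ (u j - 1) else 0) + (\<Sum>j\<in>J. if u j = Suc i then q ^ i else 0)"
    unfolding sum.distrib[symmetric] by (rule sum.cong[OF refl]) auto
  have "(\<Sum>j\<in>J. if u j = Suc i then q ^ i else 0) = card {j\<in>J. u j = Suc i} * q ^ i"
    using fin by (simp add: sum.If_cases Int_def)
  also have "\<dots> \<le> (q - 1) * q ^ i" using mult[rule_format, of "Suc i"] by (intro mult_right_mono) auto
  finally have "(\<Sum>j\<in>J. if u j \<le> Suc i then q ^ (u j - 1) else 0) \<le> (q ^ i - 1) + (q - 1) * q ^ i"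
    using split Suc.IH by linarith
  also have "\<dots> = q ^ Suc i - 1"
  proof -
    have "q ^ i \<ge> 1" using q by simp
    then show ?thesis using q by (simp add: algebra_simps diff_mult_distrib)
  qed
  finally show ?case .
qed

lemma case1_sum:
  fixes q :: nat and u :: "nat \<Rightarrow> nat"
  assumes q: "q \<ge> 2" and u1: "\<forall>j\<in>{1..h}. 1 \<le> u j" and umin: "\<forall>j\<in>{1..h}. u 1 \<le> u j"
    and u1k: "u 1 \<le> k"
    and mult: "\<forall>v. card {j\<in>{1..h}. u j = v} < q"
  shows "int (u 1) \<le> (\<Sum>i<k. dlt (int q) h u i)"
proof -
  have Q: "int q \<ge> 2" using q by simp
  have ge: "dlt (int q) h u i \<ge> (if i < u 1 then 1 else 0)" for i
  proof (cases "i < u 1")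
    case True
    then have "\<forall>j\<in>{1..h}. i < u j" using umin by force
    then show ?thesis using dlt_one[OF Q] True by simp
  next
    case False
    have eqm: "q ^ (u j - 1) mod q ^ i = (if u j \<le> i then q ^ (u j - 1) else 0)" if j: "j \<in> {1..h}" for j
    proof (cases "u j \<le> i")
      case True
      moreover have "1 \<le> u j" using u1 j by blast
      ultimately have "q ^ (u j - 1) < q ^ i" using q by (intro power_strict_increasing) auto
      then show ?thesis using True by simp
    next
      case False
      then have "q ^ i dvd q ^ (u j - 1)" by (intro le_imp_power_dvd) auto
      then show ?thesis using False by simp
    qed
    have "(\<Sum>j\<in>{1..h}. q ^ (u j - 1) mod q ^ i) = (\<Sum>j\<in>{1..h}. if u j \<le> i then q ^ (u j - 1) else 0)"
      using eqm by (rule sum.cong[OF refl])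
    also have "\<dots> \<le> q ^ i - 1" using low_sum_bound[OF q _ u1 mult] by simp
    finally have "(\<Sum>j\<in>{1..h}. q ^ (u j - 1) mod q ^ i) \<le> q ^ i" by linarith
    then have "int (\<Sum>j\<in>{1..h}. q ^ (u j - 1) mod q ^ i) \<le> int q ^ i" by (metis of_nat_le_iff of_nat_power)
    then have "(\<Sum>j\<in>{1..h}. int q ^ (u j - 1) mod int q ^ i) \<le> int q ^ i"
      by (simp add: of_nat_mod of_nat_power)
    then show ?thesis using dlt_nonneg[OF Q] False by simp
  qed
  have "(\<Sum>i<k. (if i < u 1 then 1 else 0 :: int)) = int (card {i. i < k \<and> i < u 1})"
    by (simp add: sum.If_cases Int_def)
  also have "{i. i < k \<and> i < u 1} = {..<u 1}" using u1k by auto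
  finally have "(\<Sum>i<k. (if i < u 1 then 1 else 0 :: int)) = int (u 1)" by simp
  moreover have "(\<Sum>i<k. (if i < u 1 then 1 else 0 :: int)) \<le> (\<Sum>i<k. dlt (int q) h u i)"
    by (rule sum_mono) (rule ge)
  ultimately show ?thesis by simp
qed

lemma sum_split_shift:
  fixes f :: "nat \<Rightarrow> 'b::comm_monoid_add"
  assumes "1 \<le> uu" "uu \<le> k"
  shows "(\<Sum>i<k. f i) = (\<Sum>i<uu. f i) + (\<Sum>l\<in>{1..k-uu}. f (l + uu - 1))"
proof -
  have "{..<k} = {..<uu} \<union> {uu..<k}" using assms by auto
  then have "(\<Sum>i<k. f i) = (\<Sum>i<uu. f i) + (\<Sum>i\<in>{uu..<k}. f i)"
    by (simp add: sum.union_disjoint[of "{..<uu}" "{uu..<k}"] ivl_disj_int(2))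
  also have "(\<Sum>i\<in>{uu..<k}. f i) = (\<Sum>l\<in>{1..k-uu}. f (l + uu - 1))"
    by (rule sum.reindex_bij_witness[of _ "\<lambda>l. l + uu - 1" "\<lambda>i. i + 1 - uu"]) (use assms in auto)
  finally show ?thesis .
qed

lemma case2_sum:
  fixes q :: nat and u :: "nat \<Rightarrow> nat"
  assumes q: "q \<ge> 2" and uall: "\<forall>j\<in>{1..h}. u j = uu" and uu1: "1 \<le> uu" and uuk: "uu \<le> k"
    and ihk: "ih \<le> k - uu" and dv: "\<forall>l. 1 \<le> l \<and> l \<le> ih \<longrightarrow> q ^ l dvd h"
  shows "int uu + int ih - (\<Sum>l\<in>{1..k-uu}. int (h div q ^ l)) \<le> (\<Sum>i<k. dlt (int q) h u i)"
proof -
  have Q: "int q \<ge> 2" using q by simp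
  have A: "(\<Sum>i<uu. dlt (int q) h u i) = int uu"
  proof -
    have "(\<Sum>i<uu. dlt (int q) h u i) = (\<Sum>i<uu. 1)"
    proof (rule sum.cong[OF refl])
      fix i assume "i \<in> {..<uu}"
      then have "\<forall>j\<in>{1..h}. i < u j" using uall by simp
      then show "dlt (int q) h u i = 1" by (rule dlt_one[OF Q])
    qed
    then show ?thesis by simp
  qed
  have B: "dlt (int q) h u (l + uu - 1) \<ge> (if l \<le> ih then 1 else 0) - int (h div q ^ l)"
    if l: "l \<in> {1..k-uu}" for l
  proof -
    let ?i = "l + uu - 1"
    have l1: "1 \<le> l" using l by simp
    have "(\<Sum>j\<in>{1..h}. int q ^ (u j - 1) mod int q ^ ?i) = (\<Sum>j\<in>{1..h}. int q ^ (uu - 1))"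
    proof (rule sum.cong[OF refl])
      fix j assume "j \<in> {1..h}"
      then have uj: "u j = uu" using uall by blast
      have "int q ^ (uu - 1) < int q ^ ?i" using Q l1 uu1 by (intro power_strict_increasing) auto
      then show "int q ^ (u j - 1) mod int q ^ ?i = int q ^ (uu - 1)" using uj Q by simp
    qed
    also have "\<dots> = int q ^ (uu - 1) * int h" by simp
    finally have L: "(\<Sum>j\<in>{1..h}. int q ^ (u j - 1) mod int q ^ ?i) = int q ^ (uu - 1) * int h" .
    have pw: "int q ^ ?i = int q ^ (uu - 1) * int q ^ l" using l1 uu1 by (simp add: power_add[symmetric] add.commute)
    have "(- (int q ^ (uu - 1) * int h)) div (int q ^ (uu - 1) * int q ^ l) = (- int h) div int q ^ l"
      using Q by (simp add: div_mult_mult1 del: mult_minus_right add: mult_minus_right[symmetric])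
    then have D: "dlt (int q) h u ?i = 1 + (- int h) div int q ^ l"
      unfolding dlt_def L by (simp only: pw)
    have hd: "int (h div q ^ l) = int h div int q ^ l" by (simp add: of_nat_div of_nat_power)
    have hm: "int h mod int q ^ l = 0" if "l \<le> ih"
    proof -
      have "q ^ l dvd h" using dv l1 that by blast
      then have "int q ^ l dvd int h" by (metis of_nat_dvd_iff of_nat_power)
      then show ?thesis by simp
    qed
    have qpos: "int q ^ l \<noteq> 0" using Q by simp
    show ?thesis
      unfolding D hd using hm qpos by (auto simp: zdiv_zminus1_eq_if)
  qed
  have C: "(\<Sum>l\<in>{1..k-uu}. (if l \<le> ih then 1 else 0 :: int)) = int ih"
  proof -
    have "(\<Sum>l\<in>{1..k-uu}. (if l \<le> ih then 1 else 0 :: int)) = int (card {l \<in> {1..k-uu}. l \<le> ih})"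
      by (simp add: sum.If_cases Int_def)
    also have "{l \<in> {1..k-uu}. l \<le> ih} = {1..ih}" using ihk by auto
    finally show ?thesis by simp
  qed
  have "(\<Sum>l\<in>{1..k-uu}. (if l \<le> ih then 1 else 0 :: int) - int (h div q ^ l))
        \<le> (\<Sum>l\<in>{1..k-uu}. dlt (int q) h u (l + uu - 1))"
    by (rule sum_mono) (rule B)
  then have "int ih - (\<Sum>l\<in>{1..k-uu}. int (h div q ^ l)) \<le> (\<Sum>l\<in>{1..k-uu}. dlt (int q) h u (l + uu - 1))"
    using C by (simp add: sum_subtractf)
  then show ?thesis using sum_split_shift[OF uu1 uuk, of "dlt (int q) h u"] A by simp
qed

lemma blocks_mult:
  fixes s u :: "nat \<Rightarrow> nat"
  assumes q: "q \<ge> 2" and sb: "\<forall>i\<in>{1..t}. 1 \<le> s i \<and> s i < q" and hs: "h = (\<Sum>i=1..t. s i)"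
    and blk: "\<forall>j\<in>{1..t}. \<forall>p. (\<Sum>i=1..<j. s i) < p \<and> p \<le> (\<Sum>i=1..j. s i) \<longrightarrow> u p = u (\<Sum>i=1..j. s i)"
    and inc: "\<forall>j\<in>{1..<t}. u (\<Sum>i=1..j. s i) < u (\<Sum>i=1..j+1. s i)"
  shows "\<forall>v. card {j\<in>{1..h}. u j = v} < q"
proof
  fix v
  define P where "P b = (\<Sum>i=1..b. s i)" for b
  have Pl: "(\<Sum>i=1..<b. s i) = P (b - 1)" if "b \<ge> 1" for b
  proof -
    have "{1..<b} = {1..b-1}" using that by auto
    then show ?thesis by (simp add: P_def)
  qed
  have P0: "P 0 = 0" by (simp add: P_def)
  have PSuc: "P (Suc b) = P b + s (Suc b)" for b by (simp add: P_def)
  have Pmono: "P a \<le> P b" if "a \<le> b" for a b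
    unfolding P_def by (rule sum_mono2) (use that in auto)
  have blockex: "\<exists>b\<in>{1..t}. P (b - 1) < p \<and> p \<le> P b" if p: "p \<in> {1..h}" for p
  proof -
    have ex: "p \<le> P t" using p hs by (simp add: P_def)
    define b where "b = (LEAST b. p \<le> P b)"
    have pb: "p \<le> P b" unfolding b_def by (rule LeastI[of _ t]) (rule ex)
    have bt: "b \<le> t" unfolding b_def by (rule Least_le) (rule ex)
    have b1: "b \<ge> 1"
    proof (rule ccontr)
      assume "\<not> b \<ge> 1"
      then have "b = 0" by simp
      then show False using pb P0 p by simp
    qed
    have "\<not> p \<le> P (b - 1)"
      unfolding b_def by (rule not_less_Least) (use b1 in \<open>simp add: b_def[symmetric]\<close>)
    then have "P (b - 1) < p" by simp
    moreover have "b \<in> {1..t}" using bt b1 by simp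
    ultimately show ?thesis using pb by blast
  qed
  have smono: "u (P a) < u (P b)" if "a \<in> {1..t}" "b \<in> {1..t}" "a < b" for a b
  proof -
    have "Suc a \<le> b" using that by simp
    then show ?thesis
    proof (induction b rule: dec_induct)
      case base
      have "a \<in> {1..<t}" using that by auto
      then show ?case using inc by (simp add: P_def)
    next
      case (step m)
      have "m \<in> {1..<t}" using step.hyps that by auto
      then have "u (P m) < u (P (Suc m))" using inc by (simp add: P_def)
      then show ?case using step.IH by simp
    qed
  qed
  have inj: "a = b" if ab: "a \<in> {1..t}" "b \<in> {1..t}" "u (P a) = u (P b)" for a b
  proof (rule ccontr)
    assume "a \<noteq> b"
    then consider "a < b" | "b < a" by linarith
    then show False
    proof cases
      case 1
      then show False using smono[OF ab(1) ab(2)] ab(3) by simp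
    next
      case 2
      then show False using smono[OF ab(2) ab(1)] ab(3) by simp
    qed
  qed
  have uP: "u p = u (P b)" if bp: "b \<in> {1..t}" "P (b - 1) < p" "p \<le> P b" for b p
  proof -
    have b1: "b \<ge> 1" using bp(1) by simp
    have "(\<Sum>i=1..<b. s i) < p \<and> p \<le> (\<Sum>i=1..b. s i)"
      using bp(2,3) Pl[OF b1] unfolding P_def by simp
    then have "u p = u (\<Sum>i=1..b. s i)" using blk bp(1) by blast
    then show ?thesis unfolding P_def .
  qed
  show "card {j\<in>{1..h}. u j = v} < q"
  proof (cases "{j\<in>{1..h}. u j = v} = {}")
    case True
    then have "card {j\<in>{1..h}. u j = v} = 0" by (simp only: card.empty)
    then show ?thesis using q by linarith
  next
    case False
    then obtain p0 where p0: "p0 \<in> {1..h}" "u p0 = v" by auto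
    obtain b0 where b0: "b0 \<in> {1..t}" "P (b0 - 1) < p0" "p0 \<le> P b0" using blockex[OF p0(1)] by blast
    have sub: "{j\<in>{1..h}. u j = v} \<subseteq> {P (b0 - 1)<..P b0}"
    proof
      fix p assume p: "p \<in> {j\<in>{1..h}. u j = v}"
      obtain b where b: "b \<in> {1..t}" "P (b - 1) < p" "p \<le> P b" using blockex p by blast
      have "u (P b) = u (P b0)" using uP[OF b] uP[OF b0] p p0 by simp
      then have "b = b0" using inj b(1) b0(1) by blast
      then show "p \<in> {P (b0 - 1)<..P b0}" using b by simp
    qed
    have "card {j\<in>{1..h}. u j = v} \<le> card {P (b0 - 1)<..P b0}" by (rule card_mono[OF _ sub]) simp
    also have "\<dots> = P b0 - P (b0 - 1)" by simp
    also have "\<dots> = s b0"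
    proof -
      have "b0 = Suc (b0 - 1)" using b0 by simp
      then have "P b0 = P (b0 - 1) + s b0" using PSuc[of "b0 - 1"] by simp
      then show ?thesis by simp
    qed
    also have "\<dots> < q" using sb b0 by blast
    finally show ?thesis .
  qed
qed

definition dotp :: "nat \<Rightarrow> (nat \<Rightarrow> 'a::comm_ring_1) \<Rightarrow> (nat \<Rightarrow> 'a) \<Rightarrow> 'a" where
  "dotp k x v = (\<Sum>i<k. x i * v i)"

lemma dotp_add: "dotp k x (v + w) = dotp k x v + dotp k x w"
  by (simp add: dotp_def algebra_simps sum.distrib)

lemma dotp_sc: "dotp k x (sc c v) = c * dotp k x v"
  by (simp add: dotp_def sc_apply sum_distrib_left algebra_simps)

lemma dotp_diff: "dotp k x (v - w) = dotp k x v - dotp k x w"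
  by (simp add: dotp_def algebra_simps sum_subtractf)

lemma dotp_diff_left: "dotp k (x - y) v = dotp k x v - dotp k y v"
  by (simp add: dotp_def algebra_simps sum_subtractf)

lemma fiber_card:
  fixes W :: "(nat \<Rightarrow> 'a::{field,finite}) set"
  assumes fin: "finite W" and sub: "fv.subspace W" and e: "e \<in> W" "dotp k x e \<noteq> 0"
  shows "card W = card (UNIV :: 'a set) * card {w\<in>W. dotp k x w = 0}"
proof -
  define e' where "e' = sc (inverse (dotp k x e)) e"
  have e'W: "e' \<in> W" unfolding e'_def using fv.subspace_scale[OF sub e(1)] .
  have de': "dotp k x e' = 1" unfolding e'_def dotp_sc using e(2) by simp
  let ?K = "{w\<in>W. dotp k x w = 0}"
  have bij: "bij_betw (\<lambda>(t, v). v + sc t e') ((UNIV :: 'a set) \<times> ?K) W"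
  proof (rule bij_betw_imageI)
    show "inj_on (\<lambda>(t, v). v + sc t e') ((UNIV :: 'a set) \<times> ?K)"
    proof (rule inj_onI, clarify)
      fix t v t' v' assume v: "v \<in> W" "dotp k x v = 0" and v': "v' \<in> W" "dotp k x v' = 0"
        and eq: "v + sc t e' = v' + sc t' e'"
      have "dotp k x (v + sc t e') = dotp k x (v' + sc t' e')" using eq by simp
      then have tt: "t = t'" using v v' de' by (simp add: dotp_add dotp_sc)
      then show "t = t' \<and> v = v'" using eq by simp
    qed
    show "(\<lambda>(t, v). v + sc t e') ` ((UNIV :: 'a set) \<times> ?K) = W"
    proof (rule set_eqI, rule iffI)
      fix w assume "w \<in> (\<lambda>(t, v). v + sc t e') ` ((UNIV :: 'a set) \<times> ?K)"
      then obtain t v where "v \<in> W" "w = v + sc t e'" by auto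
      then show "w \<in> W" using fv.subspace_add[OF sub _ fv.subspace_scale[OF sub e'W]] by simp
    next
      fix w assume w: "w \<in> W"
      define t where "t = dotp k x w"
      have "w - sc t e' \<in> W" using fv.subspace_diff[OF sub w fv.subspace_scale[OF sub e'W]] .
      moreover have "dotp k x (w - sc t e') = 0" by (simp add: dotp_diff dotp_sc de' t_def)
      moreover have "w = (w - sc t e') + sc t e'" by simp
      ultimately show "w \<in> (\<lambda>(t, v). v + sc t e') ` ((UNIV :: 'a set) \<times> ?K)"
        by (intro image_eqI[where x="(t, w - sc t e')"]) auto
    qed
  qed
  have "card W = card ((UNIV :: 'a set) \<times> ?K)" using bij_betw_same_card[OF bij] by simp
  then show ?thesis by (simp add: card_cartesian_product)
qed

lemma nonzero_count:
  fixes W :: "(nat \<Rightarrow> 'a::{field,finite}) set"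
  assumes fin: "finite W" and sub: "fv.subspace W"
  shows "card (UNIV :: 'a set) * card {w\<in>W. dotp k x w \<noteq> 0} \<le> (card (UNIV :: 'a set) - 1) * card W"
proof (cases "\<exists>e\<in>W. dotp k x e \<noteq> 0")
  case True
  then obtain e where e: "e \<in> W" "dotp k x e \<noteq> 0" by blast
  let ?q = "card (UNIV :: 'a set)"
  have cW: "card W = ?q * card {w\<in>W. dotp k x w = 0}" by (rule fiber_card[OF fin sub e])
  have "card W = card {w\<in>W. dotp k x w = 0} + card {w\<in>W. dotp k x w \<noteq> 0}"
  proof -
    have "W = {w\<in>W. dotp k x w = 0} \<union> {w\<in>W. dotp k x w \<noteq> 0}" by auto
    moreover have "{w\<in>W. dotp k x w = 0} \<inter> {w\<in>W. dotp k x w \<noteq> 0} = {}" by auto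
    ultimately show ?thesis using fin by (metis (no_types, lifting) card_Un_disjoint finite_Un)
  qed
  then have "?q * card {w\<in>W. dotp k x w \<noteq> 0} = ?q * card W - ?q * card {w\<in>W. dotp k x w = 0}"
    by (simp add: add_mult_distrib2)
  also have "\<dots> = ?q * card W - card W" using cW by simp
  also have "\<dots> = (?q - 1) * card W" by (simp add: diff_mult_distrib)
  finally show ?thesis by simp
next
  case False
  then have "{w\<in>W. dotp k x w \<noteq> 0} = {}" by auto
  then show ?thesis by (simp only: card.empty mult_0_right zero_le)
qed

definition ev :: "nat \<Rightarrow> nat \<Rightarrow> 'a::zero_neq_one" where
  "ev i0 = (\<lambda>i. if i = i0 then 1 else 0)"

lemma ev_fvecs: "i0 < k \<Longrightarrow> ev i0 \<in> fvecs k"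
  by (simp add: ev_def fvecs_def)

lemma dotp_ev: "i0 < k \<Longrightarrow> dotp k x (ev i0) = x i0"
  by (simp add: dotp_def ev_def if_distrib sum.delta cong: if_cong)

lemma subspace_fvecs: "fv.subspace (fvecs k :: (nat \<Rightarrow> 'a::field) set)"
  by (simp add: fv.subspace_def fvecs_def sc_apply)

lemma dotp_add_left: "dotp k (x + y) v = dotp k x v + dotp k y v"
  by (simp add: dotp_def algebra_simps sum.distrib)

lemma dotp_sc_left: "dotp k (sc c x) v = c * dotp k x v"
  by (simp add: dotp_def sc_apply sum_distrib_left algebra_simps)

lemma dotp_zero_left: "dotp k 0 v = 0"
  by (simp add: dotp_def)

lemma nonzero_count_eq:
  fixes W :: "(nat \<Rightarrow> 'a::{field,finite}) set"
  assumes fin: "finite W" and sub: "fv.subspace W" and e: "e \<in> W" "dotp k x e \<noteq> 0"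
  shows "card (UNIV :: 'a set) * card {w\<in>W. dotp k x w \<noteq> 0} = (card (UNIV :: 'a set) - 1) * card W"
proof -
  let ?q = "card (UNIV :: 'a set)"
  have cW: "card W = ?q * card {w\<in>W. dotp k x w = 0}" by (rule fiber_card[OF fin sub e])
  have "card W = card {w\<in>W. dotp k x w = 0} + card {w\<in>W. dotp k x w \<noteq> 0}"
  proof -
    have "W = {w\<in>W. dotp k x w = 0} \<union> {w\<in>W. dotp k x w \<noteq> 0}" by auto
    moreover have "{w\<in>W. dotp k x w = 0} \<inter> {w\<in>W. dotp k x w \<noteq> 0} = {}" by auto
    ultimately show ?thesis using fin by (metis (no_types, lifting) card_Un_disjoint finite_Un)
  qed
  then have "?q * card {w\<in>W. dotp k x w \<noteq> 0} = ?q * card W - ?q * card {w\<in>W. dotp k x w = 0}"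
    by (simp add: add_mult_distrib2)
  also have "\<dots> = ?q * card W - card W" using cW by simp
  also have "\<dots> = (?q - 1) * card W" by (simp add: diff_mult_distrib)
  finally show ?thesis .
qed

lemma griesmer_lin:
  fixes C :: "(nat \<Rightarrow> 'a::{field,finite}) set"
  assumes ls: "lsubspace n C" and dim: "vdim C = k"
  shows "(\<Sum>i<k. (min_dist C + card (UNIV::'a set) ^ i - 1) div card (UNIV::'a set) ^ i) \<le> n"
proof -
  have Cn: "C \<subseteq> fvecs n" and sub: "fv.subspace C" using ls by (auto simp: lsubspace_def)
  have finC: "finite C" using finite_subset[OF Cn finite_fvecs] .
  have cardC: "card C = card (UNIV::'a set) ^ k" using card_subspace[OF Cn sub] dim by simp
  have supp: "\<forall>c\<in>C. \<forall>j. j \<notin> {..<n} \<longrightarrow> c j = 0" using Cn by (auto simp: fvecs_def)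
  let ?D = "{hdist x y | x y. x \<in> C \<and> y \<in> C \<and> x \<noteq> y}"
  have finD: "finite ?D"
  proof -
    have "?D \<subseteq> (\<lambda>(x, y). hdist x y) ` (C \<times> C)" by auto
    then show ?thesis using finC by (meson finite_SigmaI finite_imageI finite_subset)
  qed
  have md: "\<forall>c\<in>C. c \<noteq> 0 \<longrightarrow> min_dist C \<le> wt c"
  proof (intro ballI impI)
    fix c assume c: "c \<in> C" "c \<noteq> 0"
    have "hdist c 0 \<in> ?D" using c fv.subspace_0[OF sub] by blast
    then have "min_dist C \<le> hdist c 0" unfolding min_dist_def using finD by (rule Min_le[rotated])
    moreover have "hdist c 0 = wt c" by (simp add: hdist_def wt_def)
    ultimately show "min_dist C \<le> wt c" by simp
  qed
  show ?thesis using griesmer_core[OF sub _ supp cardC md] by simp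
qed

lemma G_mono:
  assumes "(a::nat) \<le> b"
  shows "(\<Sum>i<k. (a + Q ^ i - 1) div Q ^ i) \<le> (\<Sum>i<k. (b + Q ^ i - 1) div (Q::nat) ^ i)"
  using assms by (intro sum_mono div_le_mono) simp

lemma scale_count:
  fixes cols :: "(nat \<Rightarrow> 'a::{field,finite}) list" and Us :: "(nat \<Rightarrow> 'a) set"
  assumes Us_scale: "\<forall>v\<in>Us. \<forall>c. c \<noteq> 0 \<longrightarrow> sc c v \<in> Us"
    and cin: "set cols \<subseteq> Us"
    and crep: "\<forall>v\<in>Us. \<exists>!j. j < length cols \<and> (\<exists>c. c \<noteq> 0 \<and> cols ! j = sc c v)"
    and Pinv: "\<forall>v c. c \<noteq> 0 \<longrightarrow> P (sc c v) = P v"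
    and nz: "0 \<notin> Us"
  shows "card {v\<in>Us. P v} = (card (UNIV::'a set) - 1) * card {j. j < length cols \<and> P (cols ! j)}"
proof -
  define Orb where "Orb j = (\<lambda>c. sc c (cols ! j)) ` (UNIV - {0})" for j
  define J where "J = {j. j < length cols \<and> P (cols ! j)}"
  have colsU: "cols ! j \<in> Us" if "j < length cols" for j using cin that nth_mem by blast
  have inv: "sc (inverse c) (sc c v) = v" if "c \<noteq> 0" for c and v :: "nat \<Rightarrow> 'a"
    using that by (simp add: fun_eq_iff sc_apply)
  have eq: "{v\<in>Us. P v} = (\<Union>j\<in>J. Orb j)"
  proof (rule set_eqI, rule iffI)
    fix v assume v: "v \<in> {v\<in>Us. P v}"
    then have "\<exists>!j. j < length cols \<and> (\<exists>c. c \<noteq> 0 \<and> cols ! j = sc c v)" using crep by simp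
    then have "\<exists>j. j < length cols \<and> (\<exists>c. c \<noteq> 0 \<and> cols ! j = sc c v)" by (rule ex1_implies_ex)
    then obtain j c where j: "j < length cols" "c \<noteq> 0" "cols ! j = sc c v" by blast
    have "v = sc (inverse c) (cols ! j)" using inv[OF j(2), of v] j(3) by simp
    moreover have "inverse c \<noteq> 0" using j by simp
    ultimately have "v \<in> Orb j" unfolding Orb_def by blast
    moreover have "P (cols ! j)" using j(2,3) v Pinv by simp
    ultimately show "v \<in> (\<Union>j\<in>J. Orb j)" using j by (auto simp: J_def)
  next
    fix v assume "v \<in> (\<Union>j\<in>J. Orb j)"
    then obtain j where jJ: "j \<in> J" "v \<in> Orb j" by blast
    then obtain c where c: "c \<in> UNIV - {0}" "v = sc c (cols ! j)" unfolding Orb_def by blast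
    have j: "j < length cols" "P (cols ! j)" using jJ(1) unfolding J_def by auto
    have "v \<in> Us" using Us_scale colsU[OF j(1)] c by simp
    moreover have "P v" using Pinv c j(2) by simp
    ultimately show "v \<in> {v\<in>Us. P v}" by simp
  qed
  have disj: "\<forall>i\<in>J. \<forall>j\<in>J. i \<noteq> j \<longrightarrow> Orb i \<inter> Orb j = {}"
  proof (intro ballI impI)
    fix i j assume ij: "i \<in> J" "j \<in> J" "i \<noteq> j"
    show "Orb i \<inter> Orb j = {}"
    proof (rule ccontr)
      assume "Orb i \<inter> Orb j \<noteq> {}"
      then obtain w where ww: "w \<in> Orb i" "w \<in> Orb j" by blast
      obtain c where c: "c \<in> UNIV - {0}" "w = sc c (cols ! i)" using ww(1) unfolding Orb_def by blast
      obtain c' where c': "c' \<in> UNIV - {0}" "w = sc c' (cols ! j)" using ww(2) unfolding Orb_def by blast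
      have w: "c \<noteq> 0" "c' \<noteq> 0" "w = sc c (cols ! i)" "w = sc c' (cols ! j)" using c c' by auto
      have iL: "i < length cols" and jL: "j < length cols" using ij by (auto simp: J_def)
      have wU: "w \<in> Us" using w Us_scale colsU[OF iL] by simp
      have Pi: "i < length cols \<and> (\<exists>c. c \<noteq> 0 \<and> cols ! i = sc c w)"
        using inv[OF w(1), of "cols ! i"] w(1,3) iL by (intro conjI exI[of _ "inverse c"]) auto
      have Pj: "j < length cols \<and> (\<exists>c. c \<noteq> 0 \<and> cols ! j = sc c w)"
        using inv[OF w(2), of "cols ! j"] w(2,4) jL by (intro conjI exI[of _ "inverse c'"]) auto
      have "\<exists>!j. j < length cols \<and> (\<exists>c. c \<noteq> 0 \<and> cols ! j = sc c w)" using crep wU by simp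
      then have "i = j" using Pi Pj by blast
      then show False using ij by simp
    qed
  qed
  have cO: "card (Orb j) = card (UNIV::'a set) - 1" if "j \<in> J" for j
  proof -
    have jL: "j < length cols" using that by (simp add: J_def)
    have "cols ! j \<noteq> 0" using colsU[OF jL] nz by auto
    then obtain i where i: "(cols ! j) i \<noteq> 0" by (auto simp: fun_eq_iff)
    have "inj_on (\<lambda>c. sc c (cols ! j)) (UNIV - {0})"
    proof (rule inj_onI)
      fix c c' assume "sc c (cols ! j) = sc c' (cols ! j)"
      then have "c * (cols ! j) i = c' * (cols ! j) i" by (metis sc_apply)
      then show "c = c'" using i by simp
    qed
    then have "card (Orb j) = card (UNIV - {0::'a})" unfolding Orb_def by (rule card_image)
    then show ?thesis by (simp add: card_Diff_singleton)
  qed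
  have "card (\<Union>j\<in>J. Orb j) = (\<Sum>j\<in>J. card (Orb j))"
  proof (rule card_UN_disjoint)
    show "finite J" unfolding J_def by simp
    show "\<forall>i\<in>J. finite (Orb i)" unfolding Orb_def by simp
    show "\<forall>i\<in>J. \<forall>j\<in>J. i \<noteq> j \<longrightarrow> Orb i \<inter> Orb j = {}" by (rule disj)
  qed
  also have "\<dots> = (\<Sum>j\<in>J. card (UNIV::'a set) - 1)" using cO by simp
  finally show ?thesis unfolding eq J_def by (simp add: mult.commute)
qed

lemma union_count:
  fixes U :: "nat \<Rightarrow> (nat \<Rightarrow> 'a) set"
  assumes h1: "h \<ge> 1" and fin: "\<forall>i\<in>{1..h}. finite (U i)" and sub0: "\<forall>i\<in>{1..h}. U 0 \<subseteq> U i"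
    and int: "\<forall>i\<in>{1..h}. \<forall>j\<in>{1..h}. i \<noteq> j \<longrightarrow> U i \<inter> U j = U 0"
  shows "card {v \<in> (\<Union>i\<in>{1..h}. U i). P v} + h * card {v\<in>U 0. P v}
         = card {v\<in>U 0. P v} + (\<Sum>i\<in>{1..h}. card {v\<in>U i. P v})"
proof -
  define A where "A = {v\<in>U 0. P v}"
  define B where "B i = {v\<in>U i. P v} - A" for i
  have 1: "1 \<in> {1..h}" using h1 by simp
  have "A \<subseteq> U 1" using sub0 1 unfolding A_def by blast
  moreover have "finite (U 1)" using fin 1 by blast
  ultimately have finA: "finite A" by (rule finite_subset)
  have AUi: "A \<subseteq> {v\<in>U i. P v}" if "i \<in> {1..h}" for i using sub0 that unfolding A_def by blast
  have finB: "finite {v\<in>U i. P v}" if "i \<in> {1..h}" for i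
  proof -
    have "finite (U i)" using fin that by blast
    then show ?thesis by simp
  qed
  have finB': "finite (B i)" if "i \<in> {1..h}" for i using finB[OF that] unfolding B_def by simp
  have eq: "{v \<in> (\<Union>i\<in>{1..h}. U i). P v} = A \<union> (\<Union>i\<in>{1..h}. B i)"
    unfolding A_def B_def using sub0 1 by blast
  have disjAB: "A \<inter> (\<Union>i\<in>{1..h}. B i) = {}" unfolding B_def by blast
  have disjB: "\<forall>i\<in>{1..h}. \<forall>j\<in>{1..h}. i \<noteq> j \<longrightarrow> B i \<inter> B j = {}"
  proof (intro ballI impI)
    fix i j assume "i \<in> {1..h}" "j \<in> {1..h}" "i \<noteq> j"
    then have "U i \<inter> U j = U 0" using int by blast
    then show "B i \<inter> B j = {}" unfolding B_def A_def by blast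
  qed
  have cB: "card (B i) = card {v\<in>U i. P v} - card A" if "i \<in> {1..h}" for i
    unfolding B_def using card_Diff_subset[OF finA AUi[OF that]] .
  have cUB: "card (\<Union>i\<in>{1..h}. B i) = (\<Sum>i\<in>{1..h}. card (B i))"
  proof (rule card_UN_disjoint)
    show "finite {1..h}" by simp
    show "\<forall>i\<in>{1..h}. finite (B i)" using finB' by blast
    show "\<forall>i\<in>{1..h}. \<forall>j\<in>{1..h}. i \<noteq> j \<longrightarrow> B i \<inter> B j = {}" by (rule disjB)
  qed
  have finUB: "finite (\<Union>i\<in>{1..h}. B i)" using finB' by blast
  have "card {v \<in> (\<Union>i\<in>{1..h}. U i). P v} = card A + (\<Sum>i\<in>{1..h}. card (B i))"
    unfolding eq cUB[symmetric] by (rule card_Un_disjoint[OF finA finUB disjAB])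
  moreover have "(\<Sum>i\<in>{1..h}. card (B i)) + h * card A = (\<Sum>i\<in>{1..h}. card {v\<in>U i. P v})"
  proof -
    have "(\<Sum>i\<in>{1..h}. card (B i)) + h * card A = (\<Sum>i\<in>{1..h}. card (B i) + card A)"
      by (simp add: sum.distrib)
    also have "\<dots> = (\<Sum>i\<in>{1..h}. card {v\<in>U i. P v})"
    proof (rule sum.cong[OF refl])
      fix i assume i: "i \<in> {1..h}"
      have "card A \<le> card {v\<in>U i. P v}" using card_mono[OF finB[OF i] AUi[OF i]] .
      then show "card (B i) + card A = card {v\<in>U i. P v}" using cB[OF i] by simp
    qed
    finally show ?thesis .
  qed
  ultimately show ?thesis by (simp add: A_def)
qed

lemma low_digit_dvd:
  assumes q: "q \<ge> (2::nat)" and l: "l \<le> low_digit q h"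
  shows "q ^ l dvd h"
  using l
proof (induction l)
  case 0
  then show ?case by simp
next
  case (Suc l)
  have ih: "q ^ l dvd h" using Suc by simp
  have "l < low_digit q h" using Suc.prems by simp
  then have "\<not> (h div q ^ l) mod q > 0" unfolding low_digit_def by (rule not_less_Least)
  then have "q dvd h div q ^ l" by (simp add: dvd_eq_mod_eq_0)
  then obtain m where "h div q ^ l = q * m" by blast
  moreover have "h = q ^ l * (h div q ^ l)" using ih by simp
  ultimately have "h = q ^ Suc l * m" by (simp add: mult.assoc)
  then show ?case by simp
qed

theorem theorem3p3:
  fixes k h :: nat
    and u :: "nat \<Rightarrow> nat"
    and U :: "nat \<Rightarrow> (nat \<Rightarrow> 'a::{field,finite}) set"
    and cols :: "(nat \<Rightarrow> 'a) list"
  defines "q \<equiv> card (UNIV :: 'a set)"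
  assumes k3: "k \<ge> 3" and h2: "h \<ge> 2"
    and u0: "1 \<le> u 0" and u01: "u 0 < u 1"
    and u_mono: "\<forall>i. 1 \<le> i \<and> i < h \<longrightarrow> u i \<le> u (i + 1)"
    and U_sub: "\<forall>i\<le>h. lsubspace k (U i) \<and> vdim (U i) = u i"
    and U_int: "\<forall>i j. 1 \<le> i \<and> i \<le> h \<and> 1 \<le> j \<and> j \<le> h \<and> i \<noteq> j \<longrightarrow> U i \<inter> U j = U 0"
    and ineq: "int q ^ k - int q ^ (k - 1) > int q ^ u 0 - 1 + (\<Sum>i=1..h. int q ^ u i - int q ^ u 0)"
    and cols_in: "set cols \<subseteq> {v \<in> fvecs k. v \<noteq> 0 \<and> (\<forall>i\<in>{1..h}. v \<notin> U i)}"
    and cols_rep: "\<forall>v \<in> {v \<in> fvecs k. v \<noteq> 0 \<and> (\<forall>i\<in>{1..h}. v \<notin> U i)}.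
                     \<exists>!j. j < length cols \<and> (\<exists>c. c \<noteq> 0 \<and> cols ! j = sc c v)"
    and cases:
      "(\<exists>(t::nat) (s::nat \<Rightarrow> nat).
          (\<forall>i\<in>{1..t}. 1 \<le> s i \<and> s i < q) \<and>
          h = (\<Sum>i=1..t. s i) \<and>
          (\<forall>j\<in>{1..t}. \<forall>p. (\<Sum>i=1..<j. s i) < p \<and> p \<le> (\<Sum>i=1..j. s i)
              \<longrightarrow> u p = u (\<Sum>i=1..j. s i)) \<and>
          (\<forall>j\<in>{1..<t}. u (\<Sum>i=1..j. s i) < u (\<Sum>i=1..j+1. s i)) \<and>
          real (u 1) > (real h - 1) * (real q ^ u 0 - 1) / (real q - 1))
       \<or>
       (\<exists>uu. (\<forall>i\<in>{1..h}. u i = uu) \<and>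
          real (low_digit q h + uu) >
            (real h - 1) * (real q ^ u 0 - 1) / (real q - 1)
            + (\<Sum>i=1..k-uu. real (h div q ^ i)))"
  shows "distance_optimal
           (nat ((int q ^ k - int q ^ u 0 - (\<Sum>i=1..h. int q ^ u i - int q ^ u 0)) div (int q - 1)))
           k
           (nat (int q ^ (k - 1) - (\<Sum>i=1..h. int q ^ (u i - 1))))
           (gen_code k cols)"
proof -
  have q2: "q \<ge> 2" unfolding q_def by (rule card_field_ge2)
  have Q2: "int q \<ge> 2" using q2 by simp
  have h1: "h \<ge> 1" using h2 by simp
  have umono: "u 1 \<le> u j" if "j \<in> {1..h}" for j
  proof -
    have j1: "1 \<le> j" and jh: "j \<le> h" using that by auto
    from j1 show ?thesis
    proof (induction j rule: dec_induct)
      case base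
      show ?case by simp
    next
      case (step m)
      then have "1 \<le> m \<and> m < h" using jh by simp
      then have "u m \<le> u (m + 1)" using u_mono by blast
      then show ?case using step.IH by simp
    qed
  qed
  have u0j: "u 0 < u j" if "j \<in> {1..h}" for j using umono[OF that] u01 by simp
  have Ufv: "U i \<subseteq> fvecs k" "fv.subspace (U i)" "vdim (U i) = u i" if "i \<le> h" for i
    using U_sub that by (auto simp: lsubspace_def)
  have cardU: "card (U i) = q ^ u i" if "i \<le> h" for i
    using card_subspace[OF Ufv(1,2)[OF that]] Ufv(3)[OF that] q_def by simp
  have finU: "finite (U i)" if "i \<le> h" for i using finite_subset[OF Ufv(1)[OF that] finite_fvecs] .
  have uk: "u i \<le> k" if "i \<le> h" for i
  proof -
    have "card (U i) \<le> card (fvecs k :: (nat \<Rightarrow> 'a) set)" by (rule card_mono[OF finite_fvecs Ufv(1)[OF that]])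
    then have "q ^ u i \<le> q ^ k" using cardU[OF that] card_fvecs[where 'a='a] q_def by simp
    then show ?thesis using q2 by (simp add: power_le_imp_le_exp)
  qed
  have intU: "\<forall>i\<in>{1..h}. \<forall>j\<in>{1..h}. i \<noteq> j \<longrightarrow> U i \<inter> U j = U 0" using U_int by auto
  have sub0: "U 0 \<subseteq> U i" if i: "i \<in> {1..h}" for i
  proof -
    obtain j where j: "j \<in> {1..h}" "j \<noteq> i"
    proof (cases "i = 1")
      case True
      then show ?thesis using that[of 2] h2 by simp
    next
      case False
      then show ?thesis using that[of 1] h2 by simp
    qed
    then have "U i \<inter> U j = U 0" using intU i by blast
    then show ?thesis by blast
  qed
  have finU1: "\<forall>i\<in>{1..h}. finite (U i)" using finU by simp
  have sub01: "\<forall>i\<in>{1..h}. U 0 \<subseteq> U i" using sub0 by blast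
  define UU where "UU = (\<Union>i\<in>{1..h}. U i)"
  define Us where "Us = {v \<in> fvecs k. v \<noteq> 0 \<and> (\<forall>i\<in>{1..h}. v \<notin> U i)}"
  have UU_sub: "UU \<subseteq> fvecs k" unfolding UU_def
  proof (rule UN_least)
    fix i assume "i \<in> {1..h}"
    then show "U i \<subseteq> fvecs k" using Ufv(1) by simp
  qed
  have one_h: "1 \<in> {1..h}" using h1 by simp
  have zero_UU: "0 \<in> UU" unfolding UU_def using fv.subspace_0[OF Ufv(2)[of 1]] h1 one_h by blast
  have Us_eq: "Us = fvecs k - UU" unfolding Us_def UU_def using zero_UU UU_def by blast
  have finFk: "finite (fvecs k :: (nat \<Rightarrow> 'a) set)" by (rule finite_fvecs)
  have cntUs: "card {v\<in>Us. P v} + card {v\<in>UU. P v} = card {v\<in>fvecs k. P v}" for P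
  proof -
    have "{v\<in>fvecs k. P v} = {v\<in>Us. P v} \<union> {v\<in>UU. P v}" using Us_eq UU_sub by blast
    moreover have "{v\<in>Us. P v} \<inter> {v\<in>UU. P v} = {}" using Us_eq by blast
    moreover have "finite {v\<in>Us. P v}" "finite {v\<in>UU. P v}"
      using finFk Us_eq UU_sub by (auto intro: finite_subset)
    ultimately show ?thesis by (simp add: card_Un_disjoint)
  qed
  have cntUU: "card {v\<in>UU. P v} + h * card {v\<in>U 0. P v}
         = card {v\<in>U 0. P v} + (\<Sum>i\<in>{1..h}. card {v\<in>U i. P v})" for P
    unfolding UU_def by (rule union_count[OF h1 finU1 sub01 intU])
  have nzUs: "0 \<notin> Us" unfolding Us_def by simp
  have Us_scale: "\<forall>v\<in>Us. \<forall>c. c \<noteq> 0 \<longrightarrow> sc c v \<in> Us"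
  proof (intro ballI allI impI)
    fix v :: "nat \<Rightarrow> 'a" and c :: 'a assume v: "v \<in> Us" and c: "c \<noteq> 0"
    have "sc c v \<in> fvecs k" using v by (simp add: Us_def fvecs_def sc_apply)
    moreover have "sc c v \<noteq> 0"
    proof
      assume "sc c v = 0"
      then have "v = 0" using c by (simp add: fun_eq_iff sc_apply)
      then show False using v nzUs by simp
    qed
    moreover have "sc c v \<notin> U i" if i: "i \<in> {1..h}" for i
    proof
      assume sv: "sc c v \<in> U i"
      have ih: "i \<le> h" using i by simp
      have "sc (inverse c) (sc c v) \<in> U i" by (rule fv.subspace_scale[OF Ufv(2)[OF ih] sv])
      moreover have "sc (inverse c) (sc c v) = v" using c by (simp add: fun_eq_iff sc_apply)
      ultimately have "v \<in> U i" by simp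
      then show False using v i by (simp add: Us_def)
    qed
    ultimately show "sc c v \<in> Us" by (simp add: Us_def)
  qed
  have cin: "set cols \<subseteq> Us" using cols_in by (simp add: Us_def)
  have crep: "\<forall>v\<in>Us. \<exists>!j. j < length cols \<and> (\<exists>c. c \<noteq> 0 \<and> cols ! j = sc c v)"
    using cols_rep by (simp add: Us_def)
  have cnt_cols: "card {v\<in>Us. P v} = (q - 1) * card {j. j < length cols \<and> P (cols ! j)}"
    if "\<forall>v c. c \<noteq> 0 \<longrightarrow> P (sc c v) = P v" for P
    using scale_count[OF Us_scale cin crep that nzUs] q_def by simp
  define n where "n = length cols"
  have cUs: "card Us = (q - 1) * n"
    using cnt_cols[of "\<lambda>_. True"] by (simp add: n_def)
  have cUU: "card UU + h * q ^ u 0 = q ^ u 0 + (\<Sum>i\<in>{1..h}. q ^ u i)"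
  proof -
    have "(\<Sum>i\<in>{1..h}. card (U i)) = (\<Sum>i\<in>{1..h}. q ^ u i)" using cardU by simp
    then show ?thesis using cntUU[of "\<lambda>_. True"] cardU[of 0] by simp
  qed
  have cUsUU: "card Us + card UU = q ^ k" using cntUs[of "\<lambda>_. True"] card_fvecs[where 'a='a] q_def by simp
  have n_int: "(int q - 1) * int n = int q ^ k - int q ^ u 0 - (\<Sum>i=1..h. int q ^ u i - int q ^ u 0)"
  proof -
    have "int (card Us) = int (q - 1) * int n" using cUs by simp
    moreover have "int (q - 1) = int q - 1" using q2 by simp
    moreover have "int (card UU) + int h * int q ^ u 0 = int q ^ u 0 + (\<Sum>i\<in>{1..h}. int q ^ u i)"
      using arg_cong[OF cUU, of int] by simp
    moreover have "int (card Us) + int (card UU) = int q ^ k" using arg_cong[OF cUsUU, of int] by simp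
    moreover have "(\<Sum>i=1..h. int q ^ u i - int q ^ u 0) = (\<Sum>i=1..h. int q ^ u i) - int h * int q ^ u 0"
      by (simp add: sum_subtractf)
    ultimately show ?thesis by (simp add: algebra_simps)
  qed
  have n_eq: "nat ((int q ^ k - int q ^ u 0 - (\<Sum>i=1..h. int q ^ u i - int q ^ u 0)) div (int q - 1)) = n"
  proof -
    have "(int q ^ k - int q ^ u 0 - (\<Sum>i=1..h. int q ^ u i - int q ^ u 0)) div (int q - 1) = int n"
      unfolding n_int[symmetric] using Q2 by simp
    then show ?thesis by simp
  qed
  define M where "M = (\<Sum>i=1..h. int q ^ (u i - 1))"
  have k1: "k \<ge> 1" using k3 by simp
  have powk: "int q ^ k = int q * int q ^ (k - 1)" using k1 by (simp add: power_eq_if)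
  have powu: "int q ^ u i = int q * int q ^ (u i - 1)" if "i \<in> {1..h}" for i
    using u0j[OF that] by (simp add: power_eq_if)
  have qM: "int q * M = (\<Sum>i=1..h. int q ^ u i)" unfolding M_def sum_distrib_left using powu by simp
  have dpos: "int q ^ (k - 1) - M \<ge> 1"
  proof -
    have a: "(int q - 1) * M \<le> (\<Sum>i=1..h. int q ^ u i - int q ^ u 0)"
    proof -
      have "(int q - 1) * M = (\<Sum>i=1..h. int q ^ u i - int q ^ (u i - 1))"
        unfolding M_def sum_distrib_left using powu by (intro sum.cong) (simp_all add: algebra_simps)
      also have "\<dots> \<le> (\<Sum>i=1..h. int q ^ u i - int q ^ u 0)"
      proof (rule sum_mono)
        fix i assume i: "i \<in> {1..h}"
        have "u 0 \<le> u i - 1" using u0j[OF i] by simp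
        then have "int q ^ u 0 \<le> int q ^ (u i - 1)" using Q2 by (intro power_increasing) auto
        then show "int q ^ u i - int q ^ (u i - 1) \<le> int q ^ u i - int q ^ u 0" by simp
      qed
      finally show ?thesis .
    qed
    have b: "int q ^ u 0 \<ge> 1" using Q2 by simp
    have "(int q - 1) * M < (int q - 1) * int q ^ (k - 1)" using a b ineq powk by (simp add: algebra_simps)
    then have "M < int q ^ (k - 1)" using Q2 by (simp add: mult_less_cancel_left)
    then show ?thesis by simp
  qed
  define d where "d = nat (int q ^ (k - 1) - M)"
  have d_int: "int d = int q ^ (k - 1) - M" using dpos by (simp add: d_def)
  have d1: "d \<ge> 1" using dpos d_int by simp
  define cw where "cw x = (\<lambda>j. if j < n then dotp k x (cols ! j) else 0)" for x
  have gc: "gen_code k cols = range cw"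
  proof -
    have "gen_code k cols = {cw x | x. True}" unfolding gen_code_def cw_def dotp_def n_def by simp
    then show ?thesis by auto
  qed
  have cw_diff: "cw (x - y) = cw x - cw y" for x y by (simp add: cw_def fun_eq_iff dotp_diff_left)
  have cw_add: "cw (x + y) = cw x + cw y" for x y by (simp add: cw_def fun_eq_iff dotp_add_left)
  have cw_sc: "cw (sc c x) = sc c (cw x)" for c x by (simp add: cw_def fun_eq_iff dotp_sc_left sc_apply)
  have cw_0: "cw 0 = 0" by (simp add: cw_def fun_eq_iff dotp_zero_left)
  have wt_cw: "(q - 1) * wt (cw x) = card {v\<in>Us. dotp k x v \<noteq> 0}" for x
  proof -
    have "wt (cw x) = card {j. j < length cols \<and> dotp k x (cols ! j) \<noteq> 0}"
      unfolding wt_def cw_def n_def by (rule arg_cong[where f=card]) auto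
    moreover have "\<forall>v c. c \<noteq> 0 \<longrightarrow> (dotp k x (sc c v) \<noteq> 0) = (dotp k x v \<noteq> 0)"
      by (simp add: dotp_sc)
    ultimately show ?thesis using cnt_cols[of "\<lambda>v. dotp k x v \<noteq> 0"] by simp
  qed
  have wt_lb: "int d \<le> int (wt (cw x))" if x0: "i0 < k" "x i0 \<noteq> 0" for x i0
  proof -
    have e: "ev i0 \<in> fvecs k" "dotp k x (ev i0) \<noteq> 0" using x0 by (simp_all add: ev_fvecs dotp_ev)
    have A: "q * card {v\<in>fvecs k. dotp k x v \<noteq> 0} = (q - 1) * q ^ k"
      using nonzero_count_eq[OF finFk subspace_fvecs e] card_fvecs[where 'a='a] q_def by simp
    have B: "q * card {v\<in>U i. dotp k x v \<noteq> 0} \<le> (q - 1) * q ^ u i" if "i \<in> {1..h}" for i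
    proof -
      have ih: "i \<le> h" using that by simp
      show ?thesis using nonzero_count[OF finU[OF ih] Ufv(2)[OF ih], of k x] cardU[OF ih] q_def by simp
    qed
    let ?a = "card {v\<in>U 0. dotp k x v \<noteq> 0}"
    have C: "card {v\<in>UU. dotp k x v \<noteq> 0} \<le> (\<Sum>i\<in>{1..h}. card {v\<in>U i. dotp k x v \<noteq> 0})"
    proof -
      have "?a \<le> h * ?a" using h1 by simp
      then show ?thesis using cntUU[of "\<lambda>v. dotp k x v \<noteq> 0"] by linarith
    qed
    have D: "card {v\<in>Us. dotp k x v \<noteq> 0} + card {v\<in>UU. dotp k x v \<noteq> 0} = card {v\<in>fvecs k. dotp k x v \<noteq> 0}"
      by (rule cntUs)
    have qC: "q * card {v\<in>UU. dotp k x v \<noteq> 0} \<le> (\<Sum>i\<in>{1..h}. (q - 1) * q ^ u i)"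
    proof -
      have "q * card {v\<in>UU. dotp k x v \<noteq> 0} \<le> q * (\<Sum>i\<in>{1..h}. card {v\<in>U i. dotp k x v \<noteq> 0})"
        using C by simp
      also have "\<dots> = (\<Sum>i\<in>{1..h}. q * card {v\<in>U i. dotp k x v \<noteq> 0})" by (simp add: sum_distrib_left)
      also have "\<dots> \<le> (\<Sum>i\<in>{1..h}. (q - 1) * q ^ u i)" by (rule sum_mono) (rule B)
      finally show ?thesis .
    qed
    let ?w = "wt (cw x)" and ?cU = "card {v\<in>UU. dotp k x v \<noteq> 0}"
    have F1: "q * ((q - 1) * ?w) + q * ?cU = (q - 1) * q ^ k"
    proof -
      have "q * ((q - 1) * ?w) + q * ?cU = q * card {v\<in>fvecs k. dotp k x v \<noteq> 0}"
        unfolding wt_cw[of x] D[symmetric] by (simp add: add_mult_distrib2)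
      then show ?thesis using A by simp
    qed
    have q1: "int (q - 1) = int q - 1" using q2 by simp
    have F1i: "int q * ((int q - 1) * int ?w) + int q * int ?cU = (int q - 1) * int q ^ k"
      using arg_cong[OF F1, of int] q1 by simp
    have F2i: "int q * int ?cU \<le> (\<Sum>i\<in>{1..h}. (int q - 1) * int q ^ u i)"
      using qC q1 by (metis (mono_tags, lifting) of_nat_le_iff of_nat_mult of_nat_power of_nat_sum sum.cong)
    have "(int q - 1) * (int q * int ?w) \<ge> (int q - 1) * (int q ^ k - (\<Sum>i\<in>{1..h}. int q ^ u i))"
      using F1i F2i by (simp add: algebra_simps sum_distrib_left)
    then have "int q * int ?w \<ge> int q ^ k - (\<Sum>i\<in>{1..h}. int q ^ u i)"
      using Q2 by (simp add: mult_le_cancel_left)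
    then have "int q * int ?w \<ge> int q * (int q ^ (k - 1) - M)"
      using qM powk by (simp add: algebra_simps)
    then have "int ?w \<ge> int q ^ (k - 1) - M" using Q2 by (simp add: mult_le_cancel_left)
    then show ?thesis using d_int by simp
  qed
  have nz_ex: "\<exists>i0<k. x i0 \<noteq> 0" if "x \<in> fvecs k" "x \<noteq> 0" for x :: "nat \<Rightarrow> 'a"
  proof (rule ccontr)
    assume "\<not> (\<exists>i0<k. x i0 \<noteq> 0)"
    then have "x = 0" using that(1) by (auto simp: fvecs_def fun_eq_iff) (metis not_le)
    then show False using that(2) by simp
  qed
  have wt0: "wt (0 :: nat \<Rightarrow> 'a) = 0" by (simp add: wt_def)
  define tr where "tr x = (\<lambda>i. if i < k then x i else (0::'a))" for x
  have tr_f: "tr x \<in> fvecs k" for x by (simp add: tr_def fvecs_def)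
  have cw_tr: "cw (tr x) = cw x" for x by (simp add: cw_def tr_def dotp_def fun_eq_iff)
  have gc2: "gen_code k cols = cw ` fvecs k"
    unfolding gc using cw_tr tr_f by (auto intro: image_eqI[where x="tr _"])
  have cw_nz: "cw x \<noteq> 0" if xx: "x \<in> fvecs k" "x \<noteq> 0" for x
  proof
    assume "cw x = 0"
    obtain i0 where "i0 < k" "x i0 \<noteq> 0" using nz_ex[OF xx] by blast
    then have "int d \<le> int (wt (cw x))" by (rule wt_lb)
    then show False using d1 \<open>cw x = 0\<close> wt0 by simp
  qed
  have inj: "inj_on cw (fvecs k)"
  proof (rule inj_onI)
    fix x y assume xy: "x \<in> fvecs k" "y \<in> fvecs k" "cw x = cw y"
    show "x = y"
    proof (rule ccontr)
      assume "x \<noteq> y"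
      then have "x - y \<in> fvecs k" "x - y \<noteq> 0" using xy by (auto simp: fvecs_def)
      then have "cw (x - y) \<noteq> 0" by (rule cw_nz)
      then show False using xy cw_diff by simp
    qed
  qed
  define C where "C = gen_code k cols"
  have cardC: "card C = q ^ k" unfolding C_def gc2 using card_image[OF inj] card_fvecs[where 'a='a] q_def by simp
  have Cn: "C \<subseteq> fvecs n" unfolding C_def gc by (auto simp: cw_def fvecs_def)
  have subC: "fv.subspace C"
    unfolding C_def gc fv.subspace_def
  proof (intro conjI ballI allI)
    have "cw 0 \<in> range cw" by (rule rangeI)
    then show "0 \<in> range cw" unfolding cw_0 .
  next
    fix a b assume "a \<in> range cw" "b \<in> range cw"
    then obtain x y where "a = cw x" "b = cw y" by blast
    then have "a + b = cw (x + y)" using cw_add by simp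
    then show "a + b \<in> range cw" by simp
  next
    fix c a assume "a \<in> range cw"
    then obtain x where "a = cw x" by blast
    then have "sc c a = cw (sc c x)" using cw_sc by simp
    then show "sc c a \<in> range cw" by simp
  qed
  have lsC: "lsubspace n C" using Cn subC by (simp add: lsubspace_def)
  have finC: "finite C" using finite_subset[OF Cn finite_fvecs] .
  have dimC: "vdim C = k"
  proof -
    have "card C = q ^ vdim C" using card_subspace[OF Cn subC] q_def by simp
    then have "q ^ vdim C = q ^ k" using cardC by simp
    then show ?thesis using q2 by (simp add: power_inject_exp)
  qed
  have wtC: "d \<le> wt c" if cC: "c \<in> C" "c \<noteq> 0" for c
  proof -
    obtain x where x: "x \<in> fvecs k" "c = cw x" using cC(1) unfolding C_def gc2 by blast
    have "x \<noteq> 0" using x cC(2) cw_0 by auto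
    then obtain i0 where "i0 < k" "x i0 \<noteq> 0" using nz_ex x(1) by blast
    then have "int d \<le> int (wt (cw x))" by (rule wt_lb)
    then show ?thesis using x by simp
  qed
  let ?D = "{hdist x y | x y. x \<in> C \<and> y \<in> C \<and> x \<noteq> y}"
  have finD: "finite ?D"
  proof -
    have "?D \<subseteq> (\<lambda>(x, y). hdist x y) ` (C \<times> C)" by auto
    then show ?thesis using finC by (meson finite_SigmaI finite_imageI finite_subset)
  qed
  have neD: "?D \<noteq> {}"
  proof -
    have "ev 0 \<in> fvecs k" using k1 by (intro ev_fvecs) simp
    moreover have "ev 0 \<noteq> (0 :: nat \<Rightarrow> 'a)" by (auto simp: ev_def fun_eq_iff)
    ultimately have "cw (ev 0) \<noteq> 0" by (rule cw_nz)
    moreover have "cw (ev 0) \<in> C" "0 \<in> C" using fv.subspace_0[OF subC] by (auto simp: C_def gc)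
    ultimately show ?thesis by blast
  qed
  have mdC: "d \<le> min_dist C"
    unfolding min_dist_def
  proof (subst Min_ge_iff[OF finD neD], intro ballI)
    fix z assume "z \<in> ?D"
    then obtain a b where ab: "a \<in> C" "b \<in> C" "a \<noteq> b" "z = hdist a b" by blast
    have "a - b \<in> C" using fv.subspace_diff[OF subC ab(1,2)] .
    moreover have "a - b \<noteq> 0" using ab(3) by simp
    ultimately have "d \<le> wt (a - b)" by (rule wtC)
    moreover have "hdist a b = wt (a - b)" by (simp add: hdist_def wt_def)
    ultimately show "d \<le> z" using ab(4) by simp
  qed
  define G where "G e = (\<Sum>i<k. (e + q ^ i - 1) div q ^ i)" for e
  have key: "(int h - 1) * (int q ^ u 0 - 1) < (int q - 1) * (\<Sum>i<k. dlt (int q) h u i)"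
  proof -
    have u1: "\<forall>j\<in>{1..h}. 1 \<le> u j"
    proof
      fix j assume "j \<in> {1..h}"
      then have "u 0 < u j" by (rule u0j)
      then show "1 \<le> u j" by simp
    qed
    have umin: "\<forall>j\<in>{1..h}. u 1 \<le> u j" using umono by blast
    have u1k: "u 1 \<le> k" using uk[of 1] h1 by simp
    have qr: "real q - 1 > 0" using q2 by simp
    from cases show ?thesis
    proof
      assume "\<exists>(t::nat) (s::nat \<Rightarrow> nat).
          (\<forall>i\<in>{1..t}. 1 \<le> s i \<and> s i < q) \<and>
          h = (\<Sum>i=1..t. s i) \<and>
          (\<forall>j\<in>{1..t}. \<forall>p. (\<Sum>i=1..<j. s i) < p \<and> p \<le> (\<Sum>i=1..j. s i)
              \<longrightarrow> u p = u (\<Sum>i=1..j. s i)) \<and>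
          (\<forall>j\<in>{1..<t}. u (\<Sum>i=1..j. s i) < u (\<Sum>i=1..j+1. s i)) \<and>
          real (u 1) > (real h - 1) * (real q ^ u 0 - 1) / (real q - 1)"
      then obtain t :: nat and s :: "nat \<Rightarrow> nat" where
        sb: "\<forall>i\<in>{1..t}. 1 \<le> s i \<and> s i < q" and hs: "h = (\<Sum>i=1..t. s i)"
        and blk: "\<forall>j\<in>{1..t}. \<forall>p. (\<Sum>i=1..<j. s i) < p \<and> p \<le> (\<Sum>i=1..j. s i)
              \<longrightarrow> u p = u (\<Sum>i=1..j. s i)"
        and inc: "\<forall>j\<in>{1..<t}. u (\<Sum>i=1..j. s i) < u (\<Sum>i=1..j+1. s i)"
        and rc: "real (u 1) > (real h - 1) * (real q ^ u 0 - 1) / (real q - 1)"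
        by blast
      have mult: "\<forall>v. card {j\<in>{1..h}. u j = v} < q" by (rule blocks_mult[OF q2 sb hs blk inc])
      have S: "int (u 1) \<le> (\<Sum>i<k. dlt (int q) h u i)" by (rule case1_sum[OF q2 u1 umin u1k mult])
      have "(real h - 1) * (real q ^ u 0 - 1) < real (u 1) * (real q - 1)"
        using rc qr by (simp add: pos_divide_less_eq)
      then have "real_of_int ((int h - 1) * (int q ^ u 0 - 1)) < real_of_int (int (u 1) * (int q - 1))"
        by simp
      then have "(int h - 1) * (int q ^ u 0 - 1) < int (u 1) * (int q - 1)" by (simp only: of_int_less_iff)
      moreover have "int (u 1) * (int q - 1) \<le> (int q - 1) * (\<Sum>i<k. dlt (int q) h u i)"
        using S Q2 by (simp add: mult.commute mult_left_mono)
      ultimately show ?thesis by linarith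
    next
      assume "\<exists>uu. (\<forall>i\<in>{1..h}. u i = uu) \<and>
          real (low_digit q h + uu) >
            (real h - 1) * (real q ^ u 0 - 1) / (real q - 1)
            + (\<Sum>i=1..k-uu. real (h div q ^ i))"
      then obtain uu where ua: "\<forall>i\<in>{1..h}. u i = uu"
        and rc: "real (low_digit q h + uu) > (real h - 1) * (real q ^ u 0 - 1) / (real q - 1)
            + (\<Sum>i=1..k-uu. real (h div q ^ i))" by blast
      have uu: "uu = u 1" using ua one_h by simp
      have uu1: "1 \<le> uu" using u1 one_h uu by simp
      have uuk: "uu \<le> k" using u1k uu by simp
      have u0uu: "u 0 < uu" using u01 uu by simp
      define ih where "ih = low_digit q h"
      have dv: "\<forall>l. 1 \<le> l \<and> l \<le> ih \<longrightarrow> q ^ l dvd h" using low_digit_dvd[OF q2] ih_def by blast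
      have ihk: "ih \<le> k - uu"
      proof (rule ccontr)
        assume "\<not> ih \<le> k - uu"
        then have kih: "k - uu + 1 \<le> low_digit q h" unfolding ih_def by simp
        have "q ^ (k - uu + 1) dvd h" by (rule low_digit_dvd[OF q2 kih])
        then have hge: "q ^ (k - uu + 1) \<le> h" using h1 by (simp add: dvd_imp_le)
        have pk: "int q ^ (k - uu + 1) * int q ^ (uu - 1) = int q ^ k"
        proof -
          have "k - uu + 1 + (uu - 1) = k" using uu1 uuk by simp
          then show ?thesis by (metis power_add)
        qed
        have ssum: "(\<Sum>i=1..h. int q ^ u i - int q ^ u 0) = int h * (int q ^ uu - int q ^ u 0)"
        proof -
          have "(\<Sum>i=1..h. int q ^ u i - int q ^ u 0) = (\<Sum>i=1..h. int q ^ uu - int q ^ u 0)"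
          proof (rule sum.cong[OF refl])
            fix i assume "i \<in> {1..h}"
            then have "u i = uu" using ua by blast
            then show "int q ^ u i - int q ^ u 0 = int q ^ uu - int q ^ u 0" by simp
          qed
          then show ?thesis by simp
        qed
        have a: "int q ^ uu - int q ^ u 0 \<ge> int q ^ (uu - 1)"
        proof -
          have "int q ^ u 0 \<le> int q ^ (uu - 1)" using Q2 u0uu by (intro power_increasing) auto
          moreover have "int q ^ uu = int q * int q ^ (uu - 1)" using uu1 by (simp add: power_eq_if)
          moreover have "int q * int q ^ (uu - 1) \<ge> 2 * int q ^ (uu - 1)"
            using Q2 by (intro mult_right_mono) auto
          ultimately show ?thesis by linarith
        qed
        have "int (q ^ (k - uu + 1)) \<le> int h" using hge by (simp only: of_nat_le_iff)
        then have b: "int h \<ge> int q ^ (k - uu + 1)" by simp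
        have "int h * (int q ^ uu - int q ^ u 0) \<ge> int q ^ (k - uu + 1) * int q ^ (uu - 1)"
          using a b by (intro mult_mono) auto
        then have c: "int h * (int q ^ uu - int q ^ u 0) \<ge> int q ^ k" using pk by simp
        have "int q ^ u 0 \<ge> 1" "int q ^ (k - 1) \<ge> 0" using Q2 by auto
        then show False using ineq ssum c by linarith
      qed
      have S: "int uu + int ih - (\<Sum>l\<in>{1..k-uu}. int (h div q ^ l)) \<le> (\<Sum>i<k. dlt (int q) h u i)"
        by (rule case2_sum[OF q2 ua uu1 uuk ihk dv])
      have "(real h - 1) * (real q ^ u 0 - 1) / (real q - 1) < real (ih + uu) - (\<Sum>i=1..k-uu. real (h div q ^ i))"
        using rc ih_def by simp
      then have "(real h - 1) * (real q ^ u 0 - 1) < (real (ih + uu) - (\<Sum>i=1..k-uu. real (h div q ^ i))) * (real q - 1)"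
        using qr by (simp add: pos_divide_less_eq)
      then have "real_of_int ((int h - 1) * (int q ^ u 0 - 1))
          < real_of_int ((int uu + int ih - (\<Sum>l\<in>{1..k-uu}. int (h div q ^ l))) * (int q - 1))"
        by (simp add: add.commute)
      then have "(int h - 1) * (int q ^ u 0 - 1) < (int uu + int ih - (\<Sum>l\<in>{1..k-uu}. int (h div q ^ l))) * (int q - 1)"
        by (simp only: of_int_less_iff)
      moreover have "(int uu + int ih - (\<Sum>l\<in>{1..k-uu}. int (h div q ^ l))) * (int q - 1)
          \<le> (int q - 1) * (\<Sum>i<k. dlt (int q) h u i)"
        using S Q2 by (simp add: mult.commute mult_left_mono)
      ultimately show ?thesis by linarith
    qed
  qed
  have nG: "n < G (d + 1)"
  proof -
    have uk1: "\<forall>j\<in>{1..h}. 1 \<le> u j \<and> u j \<le> k"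
    proof
      fix j assume j: "j \<in> {1..h}"
      then have "u 0 < u j" by (rule u0j)
      moreover have "u j \<le> k" using j by (intro uk) simp
      ultimately show "1 \<le> u j \<and> u j \<le> k" by simp
    qed
    have ar: "int q ^ k - int q ^ u 0 - (\<Sum>j\<in>{1..h}. int q ^ u j - int q ^ u 0)
         < (int q - 1) * (\<Sum>i<k. (int q ^ (k - 1) - M + 1 + int q ^ i - 1) div int q ^ i)"
      using arith_main[OF Q2 uk1 key[unfolded dlt_def]] unfolding M_def .
    have "int (G (d + 1)) = (\<Sum>i<k. (int q ^ (k - 1) - M + 1 + int q ^ i - 1) div int q ^ i)"
    proof -
      have "int (G (d + 1)) = (\<Sum>i<k. int ((d + 1 + q ^ i - 1) div q ^ i))" by (simp add: G_def)
      also have "\<dots> = (\<Sum>i<k. (int q ^ (k - 1) - M + 1 + int q ^ i - 1) div int q ^ i)"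
      proof (rule sum.cong[OF refl])
        fix i
        have "q ^ i \<ge> 1" using q2 by simp
        have e1: "int (d + 1 + q ^ i - 1) = int d + int q ^ i" by simp
        have e2: "int q ^ (k - 1) - M + 1 + int q ^ i - 1 = int d + int q ^ i" using d_int by simp
        have "int ((d + 1 + q ^ i - 1) div q ^ i) = int (d + 1 + q ^ i - 1) div int (q ^ i)"
          by (rule zdiv_int)
        then show "int ((d + 1 + q ^ i - 1) div q ^ i) = (int q ^ (k - 1) - M + 1 + int q ^ i - 1) div int q ^ i"
          unfolding e2 using e1 by simp
      qed
      finally show ?thesis .
    qed
    then have "(int q - 1) * int n < (int q - 1) * int (G (d + 1))" using ar n_int by simp
    then show ?thesis using Q2 by (simp add: mult_less_cancel_left)
  qed
  have GC: "G (min_dist C) \<le> n" unfolding G_def q_def n_def[symmetric] using griesmer_lin[OF lsC dimC] by simp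
  have md: "min_dist C = d"
  proof (rule ccontr)
    assume "min_dist C \<noteq> d"
    then have "d + 1 \<le> min_dist C" using mdC by simp
    then have "G (d + 1) \<le> G (min_dist C)" unfolding G_def by (rule G_mono)
    then show False using GC nG by simp
  qed
  have lc: "lin_code n k d C" using lsC dimC md by (simp add: lin_code_def)
  have no: "\<not> (\<exists>C' :: (nat \<Rightarrow> 'a) set. lin_code n k (d + 1) C')"
  proof
    assume "\<exists>C' :: (nat \<Rightarrow> 'a) set. lin_code n k (d + 1) C'"
    then obtain C' :: "(nat \<Rightarrow> 'a) set" where C': "lin_code n k (d + 1) C'" by blast
    then have "G (min_dist C') \<le> n" unfolding G_def q_def lin_code_def using griesmer_lin by blast
    moreover have "min_dist C' = d + 1" using C' by (simp add: lin_code_def)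
    ultimately show False using nG by simp
  qed
  show ?thesis unfolding n_eq M_def[symmetric] d_def[symmetric] C_def[symmetric] distance_optimal_def
    using lc no by simp
qed

end
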